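(* Let $\Omega\subset\mathbb{R}^2$ have properties (i), $( * )$ and $( ** )$, and let $\cosh_\Omega,\sinh_\Omega$ and $\cosh_{\Omega^\diamond},\sinh_{\Omega^\diamond}$ be defined as in the context. Then $\cosh_\Omega$ and $\sinh_\Omega$ are locally Lipschitz and therefore differentiable almost everywhere. If for an angle $\theta$ the set $\theta^\diamond$ consists of a single element $\eta$, then $$\frac{d}{d\theta}\cosh_\Omega\theta=\sinh_{\Omega^\diamond}\eta,\qquad \frac{d}{d\theta}\sinh_\Omega\theta=\cosh_{\Omega^\diamond}\eta.$$ There is at most a countable set of values of $\theta$ where the left and right derivatives of $\cosh_\Omega$ (respectively $\sinh_\Omega$) differ; at such $\theta$ the set $\{\sinh_{\Omega^\diamond}\eta:\eta\in\theta^\diamond\}$ (respectively $\{\cosh_{\Omega^\diamond}\eta:\eta\in\theta^\diamond\}$) lies between the left and right derivatives of $\cosh_\Omega$ (respectively $\sinh_\Omega$).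
   Context: Points of $\mathbb{R}^2$ are $(x,y)$, points of $\mathbb{R}^{2*}$ are $(p,q)$. Antipolar: $\Omega^\diamond=\{(p,q): px-qy\ge1\ \forall(x,y)\in\Omega\}$. Property (i): $\Omega$ nonempty, convex, closed, $0\notin\Omega$, $\lambda\Omega\subset\Omega$ for all $\lambda>1$. Property $( * )$: $\lambda\Omega\cap\partial\Omega=\varnothing$ for all $\lambda>1$. Property $( ** )$: with $C=\operatorname{cl}(\mathbb{R}_+\Omega)$ and $\partial C=l_0\cup l_1$ its two boundary rays, $\operatorname{dist}(l_0,\Omega)=\operatorname{dist}(l_1,\Omega)=0$. (Under these assumptions $\Omega^\diamond$ also has properties (i), $( * )$, $( ** )$.) Hyperbolic convex trigonometric functions: fix $\omega_0=(x_0,y_0)\in\partial\Omega$ and $\omega_0^\diamond=(p_0,q_0)\in\partial\Omega^\diamond$ with $p_0x_0-q_0y_0=1$. For $\omega=(x,y)\in\partial\Omega$ let $\theta$ be twice the signed area of the region bounded by the segment from the origin $O$ to $\omega_0$, the arc of $\partial\Omega$ from $\omega_0$ to $\omega$, and the segment from $\omega$ to $O$ (positive when the arc runs counterclockwise); set $\cosh_\Omega\theta=x$, $\sinh_\Omega\theta=y$. The domain of these functions is the (open) interval or line of values of $\theta$ obtained this way. The functions $\cosh_{\Omega^\diamond}\eta,\sinh_{\Omega^\diamond}\eta$ are defined in the same way from $\Omega^\diamond$ and $\omega_0^\diamond$ in the $(p,q)$-plane. For $\theta$ in the domain of $\cosh_\Omega$, $\theta^\diamond$ is the set of $\eta$ with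 $\cosh_\Omega\theta\cosh_{\Omega^\diamond}\eta-\sinh_\Omega\theta\sinh_{\Omega^\diamond}\eta=1$ (the left-hand side is always $\ge1$). *)

theory Defs
  imports "HOL-Analysis.Analysis"
begin

definition prop_i :: "(real \<times> real) set \<Rightarrow> bool" where
  "prop_i \<Omega> \<longleftrightarrow> \<Omega> \<noteq> {} \<and> convex \<Omega> \<and> closed \<Omega> \<and> (0::real\<times>real) \<notin> \<Omega> \<and>
     (\<forall>c::real. c > 1 \<longrightarrow> (\<lambda>w. c *\<^sub>R w) ` \<Omega> \<subseteq> \<Omega>)"

definition prop_star :: "(real \<times> real) set \<Rightarrow> bool" where
  "prop_star \<Omega> \<longleftrightarrow> (\<forall>c::real. c > 1 \<longrightarrow> (\<lambda>w. c *\<^sub>R w) ` \<Omega> \<inter> frontier \<Omega> = {})"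

definition ray :: "real \<times> real \<Rightarrow> (real \<times> real) set" where
  "ray u = {t *\<^sub>R u | t. t \<ge> 0}"

definition pos_cone :: "(real \<times> real) set \<Rightarrow> (real \<times> real) set" where
  "pos_cone \<Omega> = {t *\<^sub>R w | t w. t > 0 \<and> w \<in> \<Omega>}"

definition prop_2star :: "(real \<times> real) set \<Rightarrow> bool" where
  "prop_2star \<Omega> \<longleftrightarrow> (\<exists>u0 u1. u0 \<noteq> 0 \<and> u1 \<noteq> 0 \<and>
     frontier (closure (pos_cone \<Omega>)) = ray u0 \<union> ray u1 \<and>
     setdist (ray u0) \<Omega> = 0 \<and> setdist (ray u1) \<Omega> = 0)"

definition antipolar :: "(real \<times> real) set \<Rightarrow> (real \<times> real) set" where
  "antipolar \<Omega> = {(p, q). \<forall>(x, y) \<in> \<Omega>. p * x - q * y \<ge> 1}"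

definition cross :: "real \<times> real \<Rightarrow> real \<times> real \<Rightarrow> real" where
  "cross a b = fst a * snd b - snd a * fst b"

definition sector :: "real \<times> real \<Rightarrow> real \<times> real \<Rightarrow> (real \<times> real) set" where
  "sector a b = {s *\<^sub>R a + t *\<^sub>R b | s t. s \<ge> 0 \<and> t \<ge> 0}"

text \<open>Region bounded by the segment O--a, the arc of the boundary of \<Omega> from a to b,
  and the segment b--O: the union of the segments from O to the arc points.\<close>
definition arc_region :: "(real \<times> real) set \<Rightarrow> real \<times> real \<Rightarrow> real \<times> real \<Rightarrow> (real \<times> real) set" where
  "arc_region \<Omega> a b = {t *\<^sub>R w | t w. 0 \<le> t \<and> t \<le> 1 \<and> w \<in> frontier \<Omega> \<and> w \<in> sector a b}"

text \<open>The angle \<theta> of a boundary point \<omega>: twice the signed area, positive when the arc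
  from \<omega>0 to \<omega> runs counterclockwise.\<close>
definition conv_angle :: "(real \<times> real) set \<Rightarrow> real \<times> real \<Rightarrow> real \<times> real \<Rightarrow> real" where
  "conv_angle \<Omega> \<omega>0 \<omega> =
     (if cross \<omega>0 \<omega> \<ge> 0 then 1 else -1) * (2 * measure lebesgue (arc_region \<Omega> \<omega>0 \<omega>))"

definition conv_domain :: "(real \<times> real) set \<Rightarrow> real \<times> real \<Rightarrow> real set" where
  "conv_domain \<Omega> \<omega>0 = conv_angle \<Omega> \<omega>0 ` frontier \<Omega>"

definition conv_point :: "(real \<times> real) set \<Rightarrow> real \<times> real \<Rightarrow> real \<Rightarrow> real \<times> real" where
  "conv_point \<Omega> \<omega>0 \<theta> = (THE \<omega>. \<omega> \<in> frontier \<Omega> \<and> conv_angle \<Omega> \<omega>0 \<omega> = \<theta>)"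

definition cosh_conv :: "(real \<times> real) set \<Rightarrow> real \<times> real \<Rightarrow> real \<Rightarrow> real" where
  "cosh_conv \<Omega> \<omega>0 \<theta> = fst (conv_point \<Omega> \<omega>0 \<theta>)"

definition sinh_conv :: "(real \<times> real) set \<Rightarrow> real \<times> real \<Rightarrow> real \<Rightarrow> real" where
  "sinh_conv \<Omega> \<omega>0 \<theta> = snd (conv_point \<Omega> \<omega>0 \<theta>)"

definition dual_angles ::
  "(real \<times> real) set \<Rightarrow> real \<times> real \<Rightarrow> real \<times> real \<Rightarrow> real \<Rightarrow> real set" where
  "dual_angles \<Omega> \<omega>0 \<omega>0' \<theta> = {\<eta> \<in> conv_domain (antipolar \<Omega>) \<omega>0'.
     cosh_conv \<Omega> \<omega>0 \<theta> * cosh_conv (antipolar \<Omega>) \<omega>0' \<eta>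
       - sinh_conv \<Omega> \<omega>0 \<theta> * sinh_conv (antipolar \<Omega>) \<omega>0' \<eta> = 1}"

definition loc_lipschitz_on :: "real set \<Rightarrow> (real \<Rightarrow> real) \<Rightarrow> bool" where
  "loc_lipschitz_on D f \<longleftrightarrow> (\<forall>x\<in>D. \<exists>e>0. \<exists>L. \<forall>a\<in>D \<inter> ball x e. \<forall>b\<in>D \<inter> ball x e.
      \<bar>f a - f b\<bar> \<le> L * \<bar>a - b\<bar>)"

end

theory Submission
  imports Defs
begin

definition vec2 :: "real \<times> real \<Rightarrow> real^2" where
  "vec2 w = (\<chi> i. if i = 1 then fst w else snd w)"

definition unvec2 :: "real^2 \<Rightarrow> real \<times> real" where
  "unvec2 v = (v $ 1, v $ 2)"

lemma vec2_comp [simp]: "vec2 w $ 1 = fst w" "vec2 w $ 2 = snd w"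
  by (auto simp: vec2_def)

lemma unvec2_vec2 [simp]: "unvec2 (vec2 w) = w"
  by (simp add: unvec2_def)

lemma vec2_unvec2 [simp]: "vec2 (unvec2 v) = v"
  unfolding vec2_def unvec2_def vec_eq_iff using exhaust_2 by (auto)

lemma continuous_unvec2: "continuous_on UNIV unvec2"
  unfolding unvec2_def by (intro continuous_intros)

lemma linear_vec2: "linear vec2"
  by (rule linearI) (auto simp: vec2_def vec_eq_iff)

lemma unvec2_meas: "unvec2 \<in> borel_measurable borel"
  by (intro borel_measurable_continuous_onI continuous_unvec2)

lemma lborel_prod_as_distr:
  "(lborel :: (real \<times> real) measure) = distr lborel borel unvec2"
proof (rule lborel_eqI)
  fix l u :: "real \<times> real"
  assume le: "\<And>b. b \<in> Basis \<Longrightarrow> l \<bullet> b \<le> u \<bullet> b"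
  have "unvec2 -` box l u = box (vec2 l) (vec2 u)"
  proof -
    have "x \<in> unvec2 -` box l u \<longleftrightarrow> x \<in> box (vec2 l) (vec2 u)" for x
    proof -
      have "x \<in> box (vec2 l) (vec2 u) \<longleftrightarrow> (\<forall>i. vec2 l $ i < x $ i \<and> x $ i < vec2 u $ i)"
        by (simp add: mem_box_cart)
      also have "\<dots> \<longleftrightarrow> fst l < x$1 \<and> x$1 < fst u \<and> snd l < x$2 \<and> x$2 < snd u"
        by (simp add: forall_2)
      finally show ?thesis
        by (cases l; cases u) (auto simp: unvec2_def mem_box Basis_prod_def inner_prod_def)
    qed
    then show ?thesis by blast
  qed
  then have "emeasure (distr lborel borel unvec2) (box l u) = emeasure lborel (box (vec2 l) (vec2 u))"
    by (subst emeasure_distr) (auto simp: unvec2_meas)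
  also have "\<dots> = ennreal (prod ((\<bullet>) (vec2 u - vec2 l)) Basis)"
  proof (rule emeasure_lborel_box)
    fix b :: "real^2" assume "b \<in> Basis"
    then obtain i where b: "b = axis i 1" by (auto simp: Basis_vec_def)
    have l1: "fst l \<le> fst u" using le[of "(1,0)"] by (auto simp: Basis_prod_def inner_prod_def)
    have l2: "snd l \<le> snd u" using le[of "(0,1)"] by (auto simp: Basis_prod_def inner_prod_def)
    show "vec2 l \<bullet> b \<le> vec2 u \<bullet> b"
      using l1 l2 exhaust_2[of i] by (auto simp: b inner_axis)
  qed
  also have "prod ((\<bullet>) (vec2 u - vec2 l)) Basis = (fst u - fst l) * (snd u - snd l)"
  proof -
    have B: "Basis = {axis 1 1, axis 2 (1::real) :: real^2}"
      by (auto simp: Basis_vec_def) (metis exhaust_2)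
    have N: "axis 1 1 \<noteq> (axis 2 (1::real) :: real^2)"
      by (simp add: axis_eq_axis)
    have "prod ((\<bullet>) (vec2 u - vec2 l)) Basis = prod ((\<bullet>) (vec2 u - vec2 l)) {axis 1 1, axis 2 1}"
      by (simp only: B)
    also have "\<dots> = ((vec2 u - vec2 l) \<bullet> axis 1 1) * ((vec2 u - vec2 l) \<bullet> axis 2 1)"
      using N by simp
    also have "\<dots> = (fst u - fst l) * (snd u - snd l)"
      by (simp add: inner_axis)
    finally show ?thesis .
  qed
  also have "\<dots> = prod ((\<bullet>) (u - l)) Basis"
    by (simp add: Basis_prod_def prod.union_disjoint inner_prod_def)
  finally show "emeasure (distr lborel borel unvec2) (box l u) = ennreal (prod ((\<bullet>) (u - l)) Basis)" .
qed simp

lemma measure_vec2_image: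
  assumes "S \<in> sets borel"
  shows "measure lborel (vec2 ` S) = measure lborel S"
proof -
  have "measure lborel S = measure (distr lborel borel unvec2) S"
    by (subst lborel_prod_as_distr[symmetric]) simp
  also have "\<dots> = measure lborel (unvec2 -` S)"
    using assms by (subst measure_distr) (auto simp: unvec2_meas)
  also have "unvec2 -` S = vec2 ` S"
    by (auto simp: image_iff) (metis vec2_unvec2)
  finally show ?thesis by simp
qed


lemma measure_triangle0:
  fixes u v :: "real \<times> real"
  shows "measure lebesgue (convex hull {0, u, v}) = \<bar>cross u v\<bar> / 2"
proof -
  have cpt: "compact (convex hull {0, u, v})"
    by (intro finite_imp_compact_convex_hull) auto
  then have bor: "convex hull {0, u, v} \<in> sets borel"
    by (auto dest: compact_imp_closed)
  have "measure lebesgue (convex hull {0, u, v}) = measure lborel (convex hull {0, u, v})"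
    using bor by (intro measure_completion) simp
  also have "\<dots> = measure lborel (vec2 ` (convex hull {0, u, v}))"
    using bor by (simp add: measure_vec2_image)
  also have "vec2 ` (convex hull {0, u, v}) = convex hull {vec2 0, vec2 u, vec2 v}"
    by (simp add: convex_hull_linear_image linear_vec2)
  also have "measure lborel (convex hull {vec2 0, vec2 u, vec2 v}) = \<bar>cross u v\<bar> / 2"
    by (subst content_triangle) (simp add: cross_def abs_minus_commute algebra_simps)
  finally show ?thesis .
qed

locale concave_fn =
  fixes I :: "real set" and h :: "real \<Rightarrow> real"
  assumes openI: "open I" and convI: "convex I" and conc: "concave_on I h"
begin

definition sl :: "real \<Rightarrow> real \<Rightarrow> real" where
  "sl a b = (h b - h a) / (b - a)"

lemma sl_sym: "sl a b = sl b a"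
  unfolding sl_def by (metis minus_diff_eq minus_divide_divide)

lemma in_I: "x \<in> I \<Longrightarrow> z \<in> I \<Longrightarrow> x \<le> y \<Longrightarrow> y \<le> z \<Longrightarrow> y \<in> I"
  using convI is_interval_convex_1 mem_is_interval_1_I by blast

lemma sl3:
  assumes "x \<in> I" "z \<in> I" "x < y" "y < z"
  shows "sl x z \<le> sl x y" "sl y z \<le> sl x z"
proof -
  have cv: "convex_on I (\<lambda>x. - h x)" using conc by (simp add: concave_on_def)
  have 1: "((- h x) - (- h y)) / (x - y) \<le> ((- h x) - (- h z)) / (x - z)"
    using convex_on_slope_le(1)[OF cv assms(1,2,3,4)] by simp
  have 2: "((- h x) - (- h z)) / (x - z) \<le> ((- h y) - (- h z)) / (y - z)"
    using convex_on_slope_le(2)[OF cv assms(1,2,3,4)] by simp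
  have e1: "(h b - h a) / (a - b) = - sl a b" for a b
    unfolding sl_def by (metis minus_diff_eq divide_minus_right)
  show "sl x z \<le> sl x y" "sl y z \<le> sl x z" using 1 2 e1[of y x] e1[of z x] e1[of z y] by simp_all
qed

lemma sl_le: assumes "x \<in> I" "z \<in> I" "x < y" "y < z" shows "sl y z \<le> sl x y"
  using sl3[OF assms] by linarith

definition Dp :: "real \<Rightarrow> real" where
  "Dp s = Sup ((sl s) ` ({s<..} \<inter> I))"

definition Dm :: "real \<Rightarrow> real" where
  "Dm s = Inf ((sl s) ` ({..<s} \<inter> I))"

lemma exists_left: assumes "s \<in> I" obtains u where "u \<in> I" "u < s"
proof -
  obtain e where "e > 0" "ball s e \<subseteq> I" using openI assms open_contains_ball by blast
  moreover have "s - e/2 \<in> ball s e" using \<open>e > 0\<close> by (simp add: dist_real_def)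
  ultimately have "s - e/2 \<in> I" by blast
  then show ?thesis using that[of "s - e/2"] \<open>e > 0\<close> by auto
qed

lemma exists_right: assumes "s \<in> I" obtains u where "u \<in> I" "s < u"
proof -
  obtain e where "e > 0" "ball s e \<subseteq> I" using openI assms open_contains_ball by blast
  moreover have "s + e/2 \<in> ball s e" using \<open>e > 0\<close> by (simp add: dist_real_def)
  ultimately have "s + e/2 \<in> I" by blast
  then show ?thesis using that[of "s + e/2"] \<open>e > 0\<close> by auto
qed

lemma right_le_left:
  assumes "s \<in> I" "u \<in> I" "t \<in> I" "u < s" "s < t"
  shows "sl s t \<le> sl u s"
  using sl_le[OF assms(2,3,4,5)] by (simp add: sl_sym)

lemma Dp_upper: assumes "s \<in> I" "t \<in> I" "s < t" shows "sl s t \<le> Dp s"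
proof -
  obtain u where u: "u \<in> I" "u < s" using exists_left assms by blast
  show ?thesis unfolding Dp_def
    by (rule cSup_upper) (use assms u right_le_left in \<open>auto intro!: bdd_aboveI2\<close>)
qed

lemma Dp_le_left: assumes "s \<in> I" "u \<in> I" "u < s" shows "Dp s \<le> sl u s"
proof -
  obtain t where t: "t \<in> I" "s < t" using exists_right assms by blast
  show ?thesis unfolding Dp_def
    by (rule cSup_least) (use assms t right_le_left in auto)
qed

lemma Dm_lower: assumes "s \<in> I" "u \<in> I" "u < s" shows "Dm s \<le> sl s u"
proof -
  obtain t where t: "t \<in> I" "s < t" using exists_right assms by blast
  have "bdd_below (sl s ` ({..<s} \<inter> I))"
  proof (rule bdd_belowI2[where m="sl s t"])
    fix x assume "x \<in> {..<s} \<inter> I"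
    then show "sl s t \<le> sl s x" using right_le_left[of s x t] assms t sl_sym[of s x] by auto
  qed
  then show ?thesis unfolding Dm_def
    by (rule cInf_lower[rotated]) (use assms in auto)
qed

lemma Dp_le_Dm: assumes "s \<in> I" shows "Dp s \<le> Dm s"
proof -
  obtain u where u: "u \<in> I" "u < s" using exists_left assms by blast
  show ?thesis unfolding Dm_def
  proof (rule cInf_greatest)
    show "sl s ` ({..<s} \<inter> I) \<noteq> {}" using u by auto
    fix x assume "x \<in> sl s ` ({..<s} \<inter> I)"
    then obtain v where "v \<in> I" "v < s" "x = sl s v" by auto
    then show "Dp s \<le> x" using Dp_le_left[OF assms, of v] sl_sym[of s v] by auto
  qed
qed

lemma Dm_ge_right: assumes "s \<in> I" "t \<in> I" "s < t" shows "sl s t \<le> Dm s"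
  using Dp_upper[OF assms] Dp_le_Dm[OF assms(1)] by linarith

lemma Dp_ge_Dm_next: assumes "s1 \<in> I" "s2 \<in> I" "s1 < s2" shows "Dm s2 \<le> Dp s1"
  using Dp_upper[OF assms] Dm_lower[OF assms(2,1,3)] by (simp add: sl_sym)

lemma supgrad_iff:
  assumes "s \<in> I"
  shows "(\<forall>t\<in>I. h t \<le> h s + \<beta> * (t - s)) \<longleftrightarrow> Dp s \<le> \<beta> \<and> \<beta> \<le> Dm s"
proof
  assume H: "\<forall>t\<in>I. h t \<le> h s + \<beta> * (t - s)"
  obtain t where t: "t \<in> I" "s < t" using exists_right assms by blast
  obtain u where u: "u \<in> I" "u < s" using exists_left assms by blast
  have "Dp s \<le> \<beta>" unfolding Dp_def
  proof (rule cSup_least)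
    show "sl s ` ({s<..} \<inter> I) \<noteq> {}" using t by auto
    fix x assume "x \<in> sl s ` ({s<..} \<inter> I)"
    then obtain t' where "t' \<in> I" "s < t'" "x = sl s t'" by auto
    then show "x \<le> \<beta>" using H by (auto simp: sl_def divide_le_eq algebra_simps)
  qed
  moreover have "\<beta> \<le> Dm s" unfolding Dm_def
  proof (rule cInf_greatest)
    show "sl s ` ({..<s} \<inter> I) \<noteq> {}" using u by auto
    fix x assume "x \<in> sl s ` ({..<s} \<inter> I)"
    then obtain t' where "t' \<in> I" "t' < s" "x = sl s t'" by auto
    then show "\<beta> \<le> x" using H by (auto simp: sl_def le_divide_eq algebra_simps)
  qed
  ultimately show "Dp s \<le> \<beta> \<and> \<beta> \<le> Dm s" by simp
next
  assume B: "Dp s \<le> \<beta> \<and> \<beta> \<le> Dm s"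
  show "\<forall>t\<in>I. h t \<le> h s + \<beta> * (t - s)"
  proof
    fix t assume t: "t \<in> I"
    consider "t = s" | "s < t" | "t < s" by linarith
    then show "h t \<le> h s + \<beta> * (t - s)"
    proof cases
      case 2
      then have "sl s t \<le> \<beta>" using Dp_upper[OF assms t] B by linarith
      then show ?thesis using 2 by (auto simp: sl_def divide_le_eq algebra_simps)
    next
      case 3
      then have "\<beta> \<le> sl s t" using Dm_lower[OF assms t] B by linarith
      then show ?thesis using 3 by (auto simp: sl_def le_divide_eq algebra_simps)
    qed simp
  qed
qed

lemma right_deriv:
  assumes "s \<in> I"
  shows "(h has_real_derivative Dp s) (at s within {s..})"
proof -
  obtain t0 where t0: "t0 \<in> I" "s < t0" using exists_right assms by blast
  obtain u where u: "u \<in> I" "u < s" using exists_left assms by blast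
  have lim: "((\<lambda>t. - sl s t) \<longlongrightarrow> Inf ((\<lambda>t. - sl s t) ` ({s<..} \<inter> I))) (at s within {s<..} \<inter> I)"
  proof (rule Lim_right_bound)
    fix a b assume "a \<in> I" "b \<in> I" "s < a" "a \<le> b"
    then show "- sl s a \<le> - sl s b"
      using sl3(1)[of s b a] assms by (cases "a = b") auto
  next
    fix a assume "a \<in> I" "s < a"
    then show "- sl u s \<le> - sl s a" using right_le_left[OF assms u(1) _ u(2)] by auto
  qed
  have "Inf ((\<lambda>t. - sl s t) ` ({s<..} \<inter> I)) = - Dp s"
  proof -
    have "(\<lambda>t. - sl s t) ` ({s<..} \<inter> I) = uminus ` (sl s ` ({s<..} \<inter> I))" by auto
    moreover have "bdd_above (sl s ` ({s<..} \<inter> I))"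
      using right_le_left[OF assms u(1) _ u(2)] by (auto intro!: bdd_aboveI2)
    moreover have "sl s ` ({s<..} \<inter> I) \<noteq> {}" using t0 by auto
    ultimately show ?thesis unfolding Dp_def by (simp add: Inf_real_def image_image)
  qed
  with lim have "((\<lambda>t. - sl s t) \<longlongrightarrow> - Dp s) (at s within {s<..} \<inter> I)" by simp
  then have "((\<lambda>t. sl s t) \<longlongrightarrow> Dp s) (at s within {s<..} \<inter> I)"
    using tendsto_minus by fastforce
  moreover have "at s within {s<..} \<inter> I = at s within {s..}"
    by (rule at_within_nhd[OF assms openI]) auto
  ultimately have "((\<lambda>t. sl s t) \<longlongrightarrow> Dp s) (at s within {s..})" by simp
  then show ?thesis
    unfolding has_field_derivative_iff sl_def by simp
qed

lemma left_deriv: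
  assumes "s \<in> I"
  shows "(h has_real_derivative Dm s) (at s within {..s})"
proof -
  obtain t0 where t0: "t0 \<in> I" "s < t0" using exists_right assms by blast
  obtain u where u: "u \<in> I" "u < s" using exists_left assms by blast
  have lim: "((\<lambda>t. - sl s t) \<longlongrightarrow> Sup ((\<lambda>t. - sl s t) ` ({..<s} \<inter> I))) (at s within {..<s} \<inter> I)"
  proof (rule Lim_left_bound)
    fix a b assume "a \<in> I" "b \<in> I" "b < s" "a \<le> b"
    then show "- sl s a \<le> - sl s b"
      using sl3(2)[of a s b] assms by (cases "a = b") (auto simp: sl_sym)
  next
    fix a assume "a \<in> I" "a < s"
    then show "- sl s a \<le> - sl s t0" using right_le_left[OF assms _ t0(1) _ t0(2)] by (auto simp: sl_sym)
  qed
  have "Sup ((\<lambda>t. - sl s t) ` ({..<s} \<inter> I)) = - Dm s"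
  proof -
    have "(\<lambda>t. - sl s t) ` ({..<s} \<inter> I) = uminus ` (sl s ` ({..<s} \<inter> I))" by auto
    moreover have "bdd_below (sl s ` ({..<s} \<inter> I))"
      using right_le_left[OF assms _ t0(1) _ t0(2)] by (auto intro!: bdd_belowI2 simp: sl_sym)
    moreover have "sl s ` ({..<s} \<inter> I) \<noteq> {}" using u by auto
    ultimately show ?thesis unfolding Dm_def by (simp add: Inf_real_def image_image)
  qed
  with lim have "((\<lambda>t. - sl s t) \<longlongrightarrow> - Dm s) (at s within {..<s} \<inter> I)" by simp
  then have "((\<lambda>t. sl s t) \<longlongrightarrow> Dm s) (at s within {..<s} \<inter> I)"
    using tendsto_minus by fastforce
  moreover have "at s within {..<s} \<inter> I = at s within {..s}"
    by (rule at_within_nhd[OF assms openI]) auto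
  ultimately have "((\<lambda>t. sl s t) \<longlongrightarrow> Dm s) (at s within {..s})" by simp
  then show ?thesis
    unfolding has_field_derivative_iff sl_def by simp
qed

lemma both_deriv:
  assumes "s \<in> I" "Dp s = Dm s"
  shows "(h has_real_derivative Dp s) (at s)"
proof -
  have "((\<lambda>y. (h y - h s) / (y - s)) \<longlongrightarrow> Dp s) (at s within {..s} \<union> {s..})"
    using left_deriv[OF assms(1)] right_deriv[OF assms(1)] assms(2)
    unfolding has_field_derivative_iff Lim_within_Un by simp
  moreover have "{..s} \<union> {s..} = (UNIV :: real set)" by auto
  ultimately show ?thesis unfolding has_field_derivative_iff by simp
qed

lemma countable_kinks: "countable {s \<in> I. Dp s \<noteq> Dm s}"
proof -
  let ?A = "{s \<in> I. Dp s \<noteq> Dm s}"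
  define q where "q s = (SOME r. r \<in> \<rat> \<and> Dp s < r \<and> r < Dm s)" for s
  have q: "q s \<in> \<rat> \<and> Dp s < q s \<and> q s < Dm s" if "s \<in> ?A" for s
  proof -
    have "Dp s < Dm s" using that Dp_le_Dm by force
    then have "\<exists>r. r \<in> \<rat> \<and> Dp s < r \<and> r < Dm s" using Rats_dense_in_real by blast
    from someI_ex[OF this] show ?thesis unfolding q_def .
  qed
  have "inj_on q ?A"
  proof (rule inj_onI)
    fix x y assume x: "x \<in> ?A" and y: "y \<in> ?A" and e: "q x = q y"
    show "x = y"
    proof (rule ccontr)
      assume "x \<noteq> y"
      then consider "x < y" | "y < x" by linarith
      then show False
      proof cases
        case 1 then show False using Dp_ge_Dm_next[of x y] q[OF x] q[OF y] x y e by auto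
      next
        case 2 then show False using Dp_ge_Dm_next[of y x] q[OF x] q[OF y] x y e by auto
      qed
    qed
  qed
  moreover have "countable (q ` ?A)"
    using q countable_rat by (meson countable_subset image_subsetI)
  ultimately show ?thesis using countable_image_inj_on by blast
qed

lemma continuous: "continuous_on I h"
proof -
  have "continuous_on I (\<lambda>x. - h x)"
    using convex_on_continuous[OF openI] conc by (simp add: concave_on_def)
  from continuous_on_minus[OF this] show ?thesis by simp
qed

lemma local_lipschitz:
  assumes "s \<in> I"
  obtains e L where "e > 0" "{s - e .. s + e} \<subseteq> I"
    "\<And>a b. a \<in> {s - e .. s + e} \<Longrightarrow> b \<in> {s - e .. s + e} \<Longrightarrow> \<bar>h a - h b\<bar> \<le> L * \<bar>a - b\<bar>"
proof -
  obtain e0 where e0: "e0 > 0" "ball s e0 \<subseteq> I" using openI assms open_contains_ball by blast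
  define e where "e = e0 / 3"
  have e: "e > 0" using e0 by (simp add: e_def)
  have sub: "{s - 2*e .. s + 2*e} \<subseteq> I"
    using e0 by (auto simp: e_def dist_real_def subset_iff)
  have I1: "s - 2*e \<in> I" "s + 2*e \<in> I" "s - e \<in> I" "s + e \<in> I" using sub e by auto
  define U where "U = sl (s - 2*e) (s - e)"
  define Lo where "Lo = sl (s + e) (s + 2*e)"
  have bnd: "Lo \<le> sl a b \<and> sl a b \<le> U" if ab: "a \<in> {s - e .. s + e}" "b \<in> {s - e .. s + e}" "a < b" for a b
  proof -
    have aI: "a \<in> I" "b \<in> I" using ab sub e by auto
    have up1: "sl a b \<le> sl (s - 2*e) a" using sl_le[of "s - 2*e" b a] aI I1 ab e by auto
    have up2: "sl (s - 2*e) a \<le> U"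
    proof (cases "a = s - e")
      case False
      then have "s - e < a" using ab by auto
      then show ?thesis unfolding U_def using sl3(1)[of "s - 2*e" a "s - e"] aI I1 e by auto
    qed (simp add: U_def)
    have lo1: "sl b (s + 2*e) \<le> sl a b" using sl_le[of a "s + 2*e" b] aI I1 ab e by (auto simp: sl_sym)
    have lo2: "Lo \<le> sl b (s + 2*e)"
    proof (cases "b = s + e")
      case False
      then have "b < s + e" using ab by auto
      then show ?thesis unfolding Lo_def using sl3(2)[of b "s + 2*e" "s + e"] aI I1 e by auto
    qed (simp add: Lo_def)
    show ?thesis using up1 up2 lo1 lo2 by linarith
  qed
  define L where "L = max \<bar>U\<bar> \<bar>Lo\<bar>"
  have lip: "\<bar>h a - h b\<bar> \<le> L * \<bar>a - b\<bar>" if ab: "a \<in> {s - e .. s + e}" "b \<in> {s - e .. s + e}" for a b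
  proof -
    have *: "\<bar>h a - h b\<bar> \<le> L * \<bar>a - b\<bar>" if "a \<in> {s - e .. s + e}" "b \<in> {s - e .. s + e}" "a < b" for a b
    proof -
      have "\<bar>sl a b\<bar> \<le> L" using bnd[OF that] unfolding L_def by linarith
      moreover have "h b - h a = sl a b * (b - a)" using that by (simp add: sl_def)
      ultimately have "\<bar>h a - h b\<bar> = \<bar>sl a b * (b - a)\<bar>" by (metis abs_minus_commute)
      also have "\<dots> = \<bar>sl a b\<bar> * (b - a)" using that by (simp add: abs_mult)
      finally have "\<bar>h a - h b\<bar> = \<bar>sl a b\<bar> * (b - a)" .
      also have "\<dots> \<le> L * (b - a)" using \<open>\<bar>sl a b\<bar> \<le> L\<close> that by (intro mult_right_mono) auto
      finally show ?thesis using that by simp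
    qed
    consider "a < b" | "a = b" | "b < a" by linarith
    then show ?thesis
    proof cases
      case 1 then show ?thesis using *[of a b] ab by simp
    next
      case 3
      have "\<bar>h b - h a\<bar> \<le> L * \<bar>b - a\<bar>" using *[of b a] ab 3 by simp
      then show ?thesis by (simp add: abs_minus_commute)
    qed simp
  qed
  have "{s - e .. s + e} \<subseteq> I" using sub e by (auto simp: subset_iff)
  then show ?thesis using that[OF e _ lip] by auto
qed

end

definition bil :: "real \<times> real \<Rightarrow> real \<times> real \<Rightarrow> real" where
  "bil u v = fst u * fst v - snd u * snd v"

lemma bil_sym: "bil u v = bil v u" by (simp add: bil_def mult.commute)
lemma bil_scale [simp]: "bil u (a *\<^sub>R v) = a * bil u v" "bil (a *\<^sub>R u) v = a * bil u v"
  by (auto simp: bil_def algebra_simps)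
lemma bil_add [simp]: "bil u (v + w) = bil u v + bil u w" "bil (v + w) u = bil v u + bil w u"
  by (auto simp: bil_def algebra_simps)
lemma bil_diff [simp]: "bil u (v - w) = bil u v - bil u w" "bil (v - w) u = bil v u - bil w u"
  by (auto simp: bil_def algebra_simps)
lemma bil_zero [simp]: "bil u 0 = 0" "bil 0 u = 0" by (auto simp: bil_def)

lemma bil_bound: "\<bar>bil u v\<bar> \<le> norm u * norm v"
proof -
  have "bil u v = u \<bullet> (fst v, - snd v)" by (simp add: bil_def inner_prod_def)
  moreover have "norm (fst v, - snd v) = norm v" by (simp add: norm_Pair norm_prod_def)
  ultimately show ?thesis using Cauchy_Schwarz_ineq2[of u "(fst v, - snd v)"] by simp
qed

lemma frac_lt1: "0 \<le> (x::real) \<Longrightarrow> x / (2 * (x + 1)) < 1"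
  by (subst divide_less_eq_1_pos) (simp_all add: algebra_simps)

lemma frac_lt1': "0 \<le> (x::real) \<Longrightarrow> x / (x + 1) < 1"
  by (subst divide_less_eq_1_pos) (simp_all add: algebra_simps)

lemma antipolar_iff: "\<pi> \<in> antipolar K \<longleftrightarrow> (\<forall>w\<in>K. 1 \<le> bil \<pi> w)"
  by (auto simp: antipolar_def bil_def case_prod_beta)

locale good_set =
  fixes K :: "(real \<times> real) set" and k0 c :: "real \<times> real"
  assumes convK: "convex K" and closedK: "closed K"
    and scaleK: "\<And>w a. w \<in> K \<Longrightarrow> a > 1 \<Longrightarrow> a *\<^sub>R w \<in> K"
    and starK: "\<And>w a. w \<in> K \<Longrightarrow> a > 1 \<Longrightarrow> a *\<^sub>R w \<notin> frontier K"
    and k0K: "k0 \<in> frontier K"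
    and lowK: "\<And>w. w \<in> K \<Longrightarrow> 1 \<le> bil c w"
    and ck0: "bil c k0 = 1"
begin

definition bb where "bb = (snd c, fst c)"
definition d where "d s = k0 + s *\<^sub>R bb"
definition II where "II = {s. \<exists>t>0. t *\<^sub>R d s \<in> K}"
definition r where "r s = Inf {t. t > 0 \<and> t *\<^sub>R d s \<in> K}"
definition hh where "hh s = 1 / r s"
definition om where "om s = r s *\<^sub>R d s"

lemma ck0': "fst c * fst k0 - snd c * snd k0 = 1" using ck0 by (simp add: bil_def)

lemma ell_d [simp]: "bil c (d s) = 1"
  using ck0' by (simp add: bil_def d_def bb_def algebra_simps)

lemma bil_c_bb [simp]: "bil c bb = 0" by (simp add: bil_def bb_def)

lemma cross_d [simp]: "cross k0 (d s) = s"
proof -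
  have "cross k0 (d s) = s * (fst c * fst k0 - snd c * snd k0)"
    by (simp add: cross_def d_def bb_def algebra_simps)
  then show ?thesis using ck0' by simp
qed

lemma cross_scale [simp]: "cross u (a *\<^sub>R v) = a * cross u v"
  by (simp add: cross_def algebra_simps)

lemma d_affine: "u + v = 1 \<Longrightarrow> u *\<^sub>R d s1 + v *\<^sub>R d s2 = d (u * s1 + v * s2)"
proof -
  assume uv: "u + v = 1"
  have "u *\<^sub>R d s1 + v *\<^sub>R d s2 = (u *\<^sub>R k0 + v *\<^sub>R k0) + (u * s1 + v * s2) *\<^sub>R bb"
    by (simp add: d_def algebra_simps)
  also have "u *\<^sub>R k0 + v *\<^sub>R k0 = k0" using uv by (metis scaleR_add_left scaleR_one)
  finally show ?thesis by (simp add: d_def)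
qed

lemma decomp:
  assumes "bil c w \<noteq> 0"
  shows "w = bil c w *\<^sub>R d (cross k0 w / bil c w)"
proof -
  have "bil c w *\<^sub>R d (cross k0 w / bil c w) = bil c w *\<^sub>R k0 + cross k0 w *\<^sub>R bb"
    using assms by (simp add: d_def scaleR_add_right)
  also have "\<dots> = w"
  proof -
    have e: "fst c * fst k0 - snd c * snd k0 = 1" by (rule ck0')
    have 1: "(fst c * fst w - snd c * snd w) * fst k0 + (fst k0 * snd w - snd k0 * fst w) * snd c
          = fst w * (fst c * fst k0 - snd c * snd k0)" by (simp add: algebra_simps)
    have 2: "(fst c * fst w - snd c * snd w) * snd k0 + (fst k0 * snd w - snd k0 * fst w) * fst c
          = snd w * (fst c * fst k0 - snd c * snd k0)" by (simp add: algebra_simps)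
    show ?thesis using 1 2 e by (simp add: prod_eq_iff bil_def cross_def bb_def)
  qed
  finally show ?thesis by simp
qed

lemma in_K_ge1: "t *\<^sub>R d s \<in> K \<Longrightarrow> 1 \<le> t"
  using lowK[of "t *\<^sub>R d s"] by simp

lemma T_eq: "{t. t > 0 \<and> t *\<^sub>R d s \<in> K} = {t. 1 \<le> t} \<inter> (\<lambda>t. t *\<^sub>R d s) -` K"
  using in_K_ge1 by force

lemma T_closed: "closed {t. t > 0 \<and> t *\<^sub>R d s \<in> K}"
  unfolding T_eq
  by (intro closed_Int closed_Collect_le continuous_closed_vimage closedK) (auto intro: continuous_intros)

lemma r_mem:
  assumes "s \<in> II"
  shows "r s *\<^sub>R d s \<in> K" "1 \<le> r s" "0 < r s"
proof -
  have ne: "{t. t > 0 \<and> t *\<^sub>R d s \<in> K} \<noteq> {}" using assms by (auto simp: II_def)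
  have bdd: "bdd_below {t. t > 0 \<and> t *\<^sub>R d s \<in> K}" by (rule bdd_belowI[where m=0]) auto
  have "r s \<in> {t. t > 0 \<and> t *\<^sub>R d s \<in> K}"
    unfolding r_def by (rule closed_contains_Inf[OF ne bdd T_closed])
  then show "r s *\<^sub>R d s \<in> K" "0 < r s" by auto
  then show "1 \<le> r s" using in_K_ge1 by blast
qed

lemma r_le: "0 < t \<Longrightarrow> t *\<^sub>R d s \<in> K \<Longrightarrow> r s \<le> t"
  unfolding r_def by (rule cInf_lower) (auto intro: bdd_belowI[where m=0])

lemma r_ge:
  assumes "s \<in> II" "r s \<le> t"
  shows "t *\<^sub>R d s \<in> K"
proof (cases "t = r s")
  case True then show ?thesis using r_mem[OF assms(1)] by simp
next
  case False
  then have gt: "t / r s > 1" using assms r_mem[OF assms(1)] by (simp add: field_simps)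
  have "(t / r s) *\<^sub>R (r s *\<^sub>R d s) \<in> K" by (rule scaleK[OF r_mem(1)[OF assms(1)] gt])
  then show ?thesis using r_mem[OF assms(1)] by simp
qed

lemma mem_iff: "0 < t \<Longrightarrow> t *\<^sub>R d s \<in> K \<longleftrightarrow> s \<in> II \<and> r s \<le> t"
  using r_ge r_le by (auto simp: II_def)

lemma om_K: "s \<in> II \<Longrightarrow> om s \<in> K" using r_mem by (simp add: om_def)

lemma ell_om [simp]: "bil c (om s) = r s" by (simp add: om_def)
lemma cross_om [simp]: "cross k0 (om s) = r s * s" by (simp add: om_def)

lemma om_frontier:
  assumes "s \<in> II"
  shows "om s \<in> frontier K"
proof -
  have "om s \<notin> interior K"
  proof
    assume "om s \<in> interior K"
    then obtain e where e: "e > 0" "ball (om s) e \<subseteq> K" using mem_interior by blast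
    define \<delta> where "\<delta> = min (e / (2 * (norm (d s) + 1))) (1/2)"
    have \<delta>: "0 < \<delta>" "\<delta> \<le> 1/2" "\<delta> * norm (d s) < e"
    proof -
      have p: "0 < e / (2 * (norm (d s) + 1))" using e by (intro divide_pos_pos) (auto intro: add_nonneg_pos)
      then show "0 < \<delta>" by (simp add: \<delta>_def)
      show "\<delta> \<le> 1/2" unfolding \<delta>_def by (rule min.cobounded2)
      have "\<delta> * norm (d s) \<le> (e / (2 * (norm (d s) + 1))) * norm (d s)"
        by (intro mult_right_mono) (auto simp: \<delta>_def)
      also have "\<dots> = e * (norm (d s) / (2 * (norm (d s) + 1)))" by simp
      also have "\<dots> < e * 1"
      proof (rule mult_strict_left_mono)
        show "norm (d s) / (2 * (norm (d s) + 1)) < 1"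
          by (rule frac_lt1) simp
      qed (use e in auto)
      finally show "\<delta> * norm (d s) < e" by simp
    qed
    have "(r s - \<delta>) *\<^sub>R d s \<in> ball (om s) e"
      using \<delta> by (simp add: om_def dist_norm algebra_simps)
    then have "(r s - \<delta>) *\<^sub>R d s \<in> K" using e by blast
    moreover have "0 < r s - \<delta>" using r_mem[OF assms] \<delta> by simp
    ultimately have "r s \<le> r s - \<delta>" using r_le by blast
    then show False using \<delta> by simp
  qed
  moreover have "om s \<in> closure K" using om_K[OF assms] closure_subset by blast
  ultimately show ?thesis by (simp add: frontier_def)
qed

lemma frontier_sub: "frontier K \<subseteq> K"
  using closedK by (simp add: frontier_subset_closed)

lemma frontier_om:
  assumes "w \<in> frontier K"
  obtains s where "s \<in> II" "w = om s"
proof -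
  have wK: "w \<in> K" using assms frontier_sub by blast
  define t where "t = bil c w"
  define s where "s = cross k0 w / t"
  have t1: "1 \<le> t" using lowK[OF wK] by (simp add: t_def)
  have w: "w = t *\<^sub>R d s" unfolding s_def t_def using t1 t_def by (intro decomp) simp
  then have sI: "s \<in> II" "r s \<le> t" using mem_iff[of t s] t1 wK by auto
  have "t = r s"
  proof (rule ccontr)
    assume "t \<noteq> r s"
    then have gt: "t / r s > 1" using sI r_mem[OF sI(1)] by (simp add: field_simps)
    have "(t / r s) *\<^sub>R om s \<notin> frontier K" by (rule starK[OF om_K[OF sI(1)] gt])
    moreover have "(t / r s) *\<^sub>R om s = w" using r_mem[OF sI(1)] w by (simp add: om_def)
    ultimately show False using assms by simp
  qed
  then show ?thesis using that[OF sI(1)] w by (simp add: om_def)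
qed

lemma om_inj: "s \<in> II \<Longrightarrow> s' \<in> II \<Longrightarrow> om s = om s' \<Longrightarrow> s = s'"
proof -
  assume a: "s \<in> II" "s' \<in> II" "om s = om s'"
  then have "r s = r s'" using ell_om by metis
  moreover have "r s * s = r s' * s'" using a cross_om by metis
  ultimately show "s = s'" using r_mem[OF a(1)] by simp
qed

lemma frontier_eq: "frontier K = om ` II"
proof
  show "frontier K \<subseteq> om ` II"
  proof
    fix w assume "w \<in> frontier K"
    then obtain s where "s \<in> II" "w = om s" by (rule frontier_om)
    then show "w \<in> om ` II" by blast
  qed
  show "om ` II \<subseteq> frontier K" using om_frontier by blast
qed

lemma hh_pos: "s \<in> II \<Longrightarrow> 0 < hh s" using r_mem by (simp add: hh_def)
lemma r_hh: "s \<in> II \<Longrightarrow> r s = 1 / hh s" using r_mem by (simp add: hh_def)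

lemma II_comb:
  assumes "s1 \<in> II" "s2 \<in> II" "0 \<le> u" "0 \<le> v" "u + v = 1"
  shows "u * s1 + v * s2 \<in> II \<and> u * hh s1 + v * hh s2 \<le> hh (u * s1 + v * s2)"
proof -
  define h1 where "h1 = hh s1"
  define h2 where "h2 = hh s2"
  have h: "0 < h1" "0 < h2" using hh_pos assms by (auto simp: h1_def h2_def)
  have den: "0 < u * h1 + v * h2"
  proof -
    have "u * min h1 h2 \<le> u * h1" "v * min h1 h2 \<le> v * h2"
      using assms by (auto intro: mult_left_mono)
    then have "u * h1 + v * h2 \<ge> min h1 h2 * (u + v)" by (simp add: algebra_simps)
    then show ?thesis using assms h by simp
  qed
  define k where "k = 1 / (u * h1 + v * h2)"
  have k: "0 < k" using den by (simp add: k_def)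
  define lam where "lam = k * u * h1"
  define mu where "mu = k * v * h2"
  have lm: "0 \<le> lam" "0 \<le> mu" "lam + mu = 1"
  proof -
    show "0 \<le> lam" "0 \<le> mu" using k h assms by (auto simp: lam_def mu_def)
    have "lam + mu = k * (u * h1 + v * h2)" by (simp add: lam_def mu_def algebra_simps)
    then show "lam + mu = 1" using den by (simp add: k_def)
  qed
  have "lam *\<^sub>R om s1 + mu *\<^sub>R om s2 \<in> K"
    using convK om_K assms lm unfolding convex_def by blast
  moreover have "lam *\<^sub>R om s1 + mu *\<^sub>R om s2 = k *\<^sub>R (u *\<^sub>R d s1 + v *\<^sub>R d s2)"
  proof -
    have "lam * r s1 = k * u" using r_hh[OF assms(1)] h by (simp add: lam_def h1_def)
    moreover have "mu * r s2 = k * v" using r_hh[OF assms(2)] h by (simp add: mu_def h2_def)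
    ultimately show ?thesis by (simp add: om_def scaleR_add_right)
  qed
  ultimately have "k *\<^sub>R d (u * s1 + v * s2) \<in> K" using d_affine[OF assms(5)] by simp
  then have "u * s1 + v * s2 \<in> II" "r (u * s1 + v * s2) \<le> k" using mem_iff k by auto
  moreover have "hh (u * s1 + v * s2) \<ge> 1 / k"
    using \<open>r (u * s1 + v * s2) \<le> k\<close> r_mem[OF \<open>u * s1 + v * s2 \<in> II\<close>] k
    unfolding hh_def by (intro divide_left_mono) auto
  ultimately show ?thesis using den by (simp add: k_def h1_def h2_def)
qed

lemma convex_II: "convex II"
  unfolding convex_def using II_comb by simp

lemma concave_hh: "concave_on II hh"
  unfolding concave_on_def convex_on_def
proof (intro conjI ballI allI impI convex_II)
  fix x y u v :: real assume "x \<in> II" "y \<in> II" "0 \<le> u" "0 \<le> v" "u + v = 1"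
  then show "- hh (u *\<^sub>R x + v *\<^sub>R y) \<le> u * - hh x + v * - hh y"
    using II_comb[of x y u v] by simp
qed

lemma II_0: "0 \<in> II" "om 0 = k0" "r 0 = 1"
proof -
  obtain s where s: "s \<in> II" "k0 = om s" using frontier_om[OF k0K] by blast
  have "cross k0 k0 = 0" by (simp add: cross_def)
  then have "r s * s = 0" using s by (metis cross_om)
  then have "s = 0" using r_mem[OF s(1)] by simp
  then show "0 \<in> II" "om 0 = k0" using s by auto
  have "bil c (om 0) = 1" using \<open>om 0 = k0\<close> ck0 by simp
  then show "r 0 = 1" by simp
qed

lemma open_II: "open II"
proof -
  have "\<exists>e>0. ball s e \<subseteq> II" if sI: "s \<in> II" for s
  proof (rule ccontr)
    assume nb: "\<not> (\<exists>e>0. ball s e \<subseteq> II)"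
    have "(2::real) *\<^sub>R om s \<notin> frontier K" by (rule starK[OF om_K[OF sI]]) simp
    moreover have "(2::real) *\<^sub>R om s \<in> frontier K"
    proof -
      have "(2::real) *\<^sub>R om s \<notin> interior K"
      proof
        assume "(2::real) *\<^sub>R om s \<in> interior K"
        then obtain e where e: "e > 0" "ball ((2::real) *\<^sub>R om s) e \<subseteq> K" using mem_interior by blast
        define \<epsilon> where "\<epsilon> = e / (2 * r s * (norm bb + 1))"
        have \<epsilon>: "\<epsilon> > 0" using e r_mem[OF sI] unfolding \<epsilon>_def
          by (intro divide_pos_pos mult_pos_pos) (auto intro: add_nonneg_pos)
        obtain s' where s': "s' \<in> ball s \<epsilon>" "s' \<notin> II" using nb \<epsilon> by blast
        have "dist ((2 * r s) *\<^sub>R d s') ((2::real) *\<^sub>R om s) = 2 * r s * \<bar>s' - s\<bar> * norm bb"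
        proof -
          have "(2 * r s) *\<^sub>R d s' - (2::real) *\<^sub>R om s = (2 * r s * (s' - s)) *\<^sub>R bb"
            by (simp add: om_def d_def algebra_simps)
          then show ?thesis using r_mem[OF sI] by (simp add: dist_norm abs_mult)
        qed
        also have "\<dots> < e"
        proof -
          have "\<bar>s' - s\<bar> < \<epsilon>" using s' by (simp add: dist_real_def abs_minus_commute)
          then have "2 * r s * \<bar>s' - s\<bar> * norm bb \<le> 2 * r s * \<epsilon> * norm bb"
            using r_mem[OF sI] by (intro mult_right_mono mult_left_mono) auto
          also have "\<dots> = e * (norm bb / (norm bb + 1))"
            using r_mem[OF sI] by (simp add: \<epsilon>_def)
          also have "\<dots> < e * 1"
          proof (rule mult_strict_left_mono)
            show "norm bb / (norm bb + 1) < 1"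
              by (rule frac_lt1') simp
          qed (use e in auto)
          finally show ?thesis by simp
        qed
        finally have "(2 * r s) *\<^sub>R d s' \<in> K" using e by (auto simp: dist_commute)
        then have "s' \<in> II" using mem_iff[of "2 * r s" s'] r_mem[OF sI] by auto
        then show False using s' by simp
      qed
      moreover have "(2::real) *\<^sub>R om s \<in> closure K"
        using scaleK[OF om_K[OF sI], of 2] closure_subset by auto
      ultimately show ?thesis by (simp add: frontier_def)
    qed
    ultimately show False by simp
  qed
  then show ?thesis by (simp add: open_contains_ball)
qed

sublocale cf: concave_fn II hh
  by unfold_locales (auto simp: open_II convex_II concave_hh)

lemma r_cont: "continuous_on II r"
proof -
  have "\<forall>s\<in>II. hh s \<noteq> 0" using hh_pos by (metis less_irrefl)
  then have "continuous_on II (\<lambda>s. 1 / hh s)"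
    by (intro continuous_on_divide continuous_on_const cf.continuous)
  moreover have "continuous_on II r \<longleftrightarrow> continuous_on II (\<lambda>s. 1 / hh s)"
    by (rule continuous_on_cong) (auto simp: r_hh)
  ultimately show ?thesis by simp
qed

end

context good_set
begin

definition fan where
  "fan s0 s1 = {t *\<^sub>R d \<sigma> | t \<sigma>. \<sigma> \<in> {s0..s1} \<and> 0 \<le> t \<and> t \<le> r \<sigma>}"

definition G where "G s0 s1 = measure lebesgue (fan s0 s1)"

lemma fan_image:
  assumes "{s0..s1} \<subseteq> II"
  shows "fan s0 s1 = (\<lambda>x. (fst x * r (snd x)) *\<^sub>R d (snd x)) ` ({0..1} \<times> {s0..s1})"
proof
  show "fan s0 s1 \<subseteq> (\<lambda>x. (fst x * r (snd x)) *\<^sub>R d (snd x)) ` ({0..1} \<times> {s0..s1})"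
  proof
    fix x assume "x \<in> fan s0 s1"
    then obtain t \<sigma> where x: "x = t *\<^sub>R d \<sigma>" "\<sigma> \<in> {s0..s1}" "0 \<le> t" "t \<le> r \<sigma>"
      by (auto simp: fan_def)
    have rp: "0 < r \<sigma>" using r_mem assms x(2) by blast
    have "x = (\<lambda>x. (fst x * r (snd x)) *\<^sub>R d (snd x)) (t / r \<sigma>, \<sigma>)" using rp x by simp
    moreover have "(t / r \<sigma>, \<sigma>) \<in> {0..1} \<times> {s0..s1}" using x rp by auto
    ultimately show "x \<in> (\<lambda>x. (fst x * r (snd x)) *\<^sub>R d (snd x)) ` ({0..1} \<times> {s0..s1})"
      by blast
  qed
next
  show "(\<lambda>x. (fst x * r (snd x)) *\<^sub>R d (snd x)) ` ({0..1} \<times> {s0..s1}) \<subseteq> fan s0 s1"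
  proof
    fix x assume "x \<in> (\<lambda>x. (fst x * r (snd x)) *\<^sub>R d (snd x)) ` ({0..1} \<times> {s0..s1})"
    then obtain a \<sigma> where x: "x = (a * r \<sigma>) *\<^sub>R d \<sigma>" "a \<in> {0..1}" "\<sigma> \<in> {s0..s1}" by auto
    have rp: "0 < r \<sigma>" using r_mem assms x(3) by blast
    have "a * r \<sigma> \<le> r \<sigma>" using x(2) rp by (simp add: mult_left_le_one_le)
    then show "x \<in> fan s0 s1" using x rp unfolding fan_def
      by (intro CollectI exI[of _ "a * r \<sigma>"] exI[of _ \<sigma>]) auto
  qed
qed

lemma fan_compact:
  assumes "{s0..s1} \<subseteq> II"
  shows "compact (fan s0 s1)"
proof -
  have "continuous_on ({0..1} \<times> {s0..s1}) (\<lambda>x. r (snd x))"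
    by (rule continuous_on_compose2[OF r_cont continuous_on_snd]) (use assms in auto)
  then have "continuous_on ({0..1} \<times> {s0..s1}) (\<lambda>x. (fst x * r (snd x)) *\<^sub>R d (snd x))"
    unfolding d_def by (intro continuous_intros) auto
  then show ?thesis unfolding fan_image[OF assms]
    by (intro compact_continuous_image compact_Times) auto
qed

lemma fan_lmeas: "{s0..s1} \<subseteq> II \<Longrightarrow> fan s0 s1 \<in> lmeasurable"
  using fan_compact lmeasurable_compact by blast

lemma cross_dd: "cross (d s0) (d s1) = s1 - s0"
proof -
  have "cross (d s0) (d s1) = (s1 - s0) * (fst c * fst k0 - snd c * snd k0)"
    by (simp add: cross_def d_def bb_def algebra_simps)
  then show ?thesis using ck0' by simp
qed

lemma tri_measure:
  assumes "s0 \<le> s1"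
  shows "measure lebesgue (convex hull {0, M *\<^sub>R d s0, M *\<^sub>R d s1}) = M\<^sup>2 * (s1 - s0) / 2"
proof -
  have "cross (M *\<^sub>R d s0) (M *\<^sub>R d s1) = M * (M * cross (d s0) (d s1))"
    by (simp add: cross_def algebra_simps)
  then have "cross (M *\<^sub>R d s0) (M *\<^sub>R d s1) = M\<^sup>2 * (s1 - s0)"
    using cross_dd[of s0 s1] by (simp add: power2_eq_square)
  then show ?thesis using measure_triangle0[of "M *\<^sub>R d s0" "M *\<^sub>R d s1"] assms
    by (simp add: abs_mult)
qed

lemma fan_sub_tri:
  assumes "s0 \<le> s1" "0 < M" "\<And>\<sigma>. \<sigma> \<in> {s0..s1} \<Longrightarrow> r \<sigma> \<le> M"
  shows "fan s0 s1 \<subseteq> convex hull {0, M *\<^sub>R d s0, M *\<^sub>R d s1}"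
proof
  fix x assume "x \<in> fan s0 s1"
  then obtain t \<sigma> where x: "x = t *\<^sub>R d \<sigma>" "\<sigma> \<in> {s0..s1}" "0 \<le> t" "t \<le> r \<sigma>"
    by (auto simp: fan_def)
  define l where "l = (if s1 = s0 then 0 else (\<sigma> - s0) / (s1 - s0))"
  have l: "0 \<le> l" "l \<le> 1" "(1 - l) * s0 + l * s1 = \<sigma>"
    using x(2) assms(1) by (auto simp: l_def field_simps)
  have tM: "t / M \<le> 1" "0 \<le> t / M" using x assms(2) assms(3)[of \<sigma>] by auto
  have "x = (1 - t / M) *\<^sub>R 0 + (t / M * (1 - l)) *\<^sub>R (M *\<^sub>R d s0) + (t / M * l) *\<^sub>R (M *\<^sub>R d s1)"
  proof -
    have "(t / M * (1 - l)) *\<^sub>R (M *\<^sub>R d s0) + (t / M * l) *\<^sub>R (M *\<^sub>R d s1)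
        = t *\<^sub>R ((1 - l) *\<^sub>R d s0 + l *\<^sub>R d s1)"
      using assms(2) by (simp add: scaleR_add_right)
    also have "(1 - l) *\<^sub>R d s0 + l *\<^sub>R d s1 = d ((1 - l) * s0 + l * s1)" by (rule d_affine) simp
    also have "\<dots> = d \<sigma>" using l by simp
    finally show ?thesis using x by simp
  qed
  moreover have "0 \<le> t / M * (1 - l)" "0 \<le> t / M * l" using x(3) assms(2) l by auto
  moreover have "(1 - t / M) + t / M * (1 - l) + t / M * l = 1" using assms(2) by (simp add: field_simps)
  ultimately show "x \<in> convex hull {0, M *\<^sub>R d s0, M *\<^sub>R d s1}"
    unfolding convex_hull_3 using tM by (intro CollectI exI[of _ "1 - t / M"] exI[of _ "t / M * (1 - l)"] exI[of _ "t / M * l"]) auto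
qed

lemma tri_sub_fan:
  assumes "s0 \<le> s1" "0 \<le> m" "\<And>\<sigma>. \<sigma> \<in> {s0..s1} \<Longrightarrow> m \<le> r \<sigma>"
  shows "convex hull {0, m *\<^sub>R d s0, m *\<^sub>R d s1} \<subseteq> fan s0 s1"
proof
  fix x assume "x \<in> convex hull {0, m *\<^sub>R d s0, m *\<^sub>R d s1}"
  then obtain u v w where x: "x = u *\<^sub>R 0 + v *\<^sub>R (m *\<^sub>R d s0) + w *\<^sub>R (m *\<^sub>R d s1)"
    "0 \<le> u" "0 \<le> v" "0 \<le> w" "u + v + w = 1"
    unfolding convex_hull_3 by blast
  show "x \<in> fan s0 s1"
  proof (cases "v + w = 0")
    case True
    then have "v = 0" "w = 0" using x by auto
    then have "x = 0 *\<^sub>R d s0" using x by simp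
    moreover have "0 \<le> r s0" using assms(2) assms(3)[of s0] assms(1) by auto
    ultimately show ?thesis unfolding fan_def using assms(1) by fastforce
  next
    case False
    then have vw: "0 < v + w" using x by auto
    define \<sigma> where "\<sigma> = (v / (v + w)) * s0 + (w / (v + w)) * s1"
    have \<sigma>: "\<sigma> \<in> {s0..s1}"
    proof -
      have vv: "v / (v + w) = 1 - w / (v + w)" using vw by (simp add: field_simps)
      have se: "\<sigma> = s0 + (w / (v + w)) * (s1 - s0)" unfolding \<sigma>_def vv by (simp add: algebra_simps diff_divide_distrib)
      have l1: "w / (v + w) \<le> 1" "0 \<le> w / (v + w)" using vw x by auto
      have "(w / (v + w)) * (s1 - s0) \<le> s1 - s0" using l1 assms(1) by (intro mult_left_le_one_le) auto
      moreover have "0 \<le> (w / (v + w)) * (s1 - s0)" by (rule mult_nonneg_nonneg) (use l1 assms(1) in auto)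
      ultimately show ?thesis using se by simp
    qed
    have "x = (m * (v + w)) *\<^sub>R ((v / (v + w)) *\<^sub>R d s0 + (w / (v + w)) *\<^sub>R d s1)"
      using x vw by (simp add: scaleR_add_right mult.commute)
    also have "(v / (v + w)) *\<^sub>R d s0 + (w / (v + w)) *\<^sub>R d s1 = d ((v / (v + w)) * s0 + (w / (v + w)) * s1)"
      by (rule d_affine) (use vw in \<open>simp add: add_divide_distrib[symmetric]\<close>)
    also have "\<dots> = d \<sigma>" by (simp add: \<sigma>_def)
    finally have xe: "x = (m * (v + w)) *\<^sub>R d \<sigma>" .
    have "m * (v + w) \<le> m" using x assms(2) by (simp add: mult_left_le)
    then have "m * (v + w) \<le> r \<sigma>" using assms(3)[OF \<sigma>] by linarith
    moreover have "0 \<le> m * (v + w)" using assms(2) vw by simp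
    ultimately show ?thesis unfolding fan_def using xe \<sigma> by blast
  qed
qed

lemma G_bounds:
  assumes "{s0..s1} \<subseteq> II" "s0 \<le> s1" "0 \<le> m" "0 < M"
    "\<And>\<sigma>. \<sigma> \<in> {s0..s1} \<Longrightarrow> m \<le> r \<sigma> \<and> r \<sigma> \<le> M"
  shows "m\<^sup>2 * (s1 - s0) / 2 \<le> G s0 s1" "G s0 s1 \<le> M\<^sup>2 * (s1 - s0) / 2"
proof -
  have ctri: "compact (convex hull {0, M *\<^sub>R d s0, M *\<^sub>R d s1})" for M
    by (intro finite_imp_compact_convex_hull) auto
  have ltri: "convex hull {0, M *\<^sub>R d s0, M *\<^sub>R d s1} \<in> lmeasurable" for M
    by (rule lmeasurable_compact[OF ctri])
  have fl: "fan s0 s1 \<in> lmeasurable" by (rule fan_lmeas[OF assms(1)])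
  have sub1: "convex hull {0, m *\<^sub>R d s0, m *\<^sub>R d s1} \<subseteq> fan s0 s1"
    by (rule tri_sub_fan[OF assms(2,3)]) (use assms(5) in blast)
  have "measure lebesgue (convex hull {0, m *\<^sub>R d s0, m *\<^sub>R d s1}) \<le> G s0 s1"
    unfolding G_def by (rule measure_mono_fmeasurable[OF sub1 fmeasurableD[OF ltri] fl])
  then show "m\<^sup>2 * (s1 - s0) / 2 \<le> G s0 s1" using tri_measure[OF assms(2)] by simp
  have sub2: "fan s0 s1 \<subseteq> convex hull {0, M *\<^sub>R d s0, M *\<^sub>R d s1}"
    by (rule fan_sub_tri[OF assms(2,4)]) (use assms(5) in blast)
  have "G s0 s1 \<le> measure lebesgue (convex hull {0, M *\<^sub>R d s0, M *\<^sub>R d s1})"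
    unfolding G_def by (rule measure_mono_fmeasurable[OF sub2 fmeasurableD[OF fl] ltri])
  then show "G s0 s1 \<le> M\<^sup>2 * (s1 - s0) / 2" using tri_measure[OF assms(2)] by simp
qed

lemma II_interval: "s0 \<in> II \<Longrightarrow> s1 \<in> II \<Longrightarrow> {s0..s1} \<subseteq> II"
proof
  fix y assume "s0 \<in> II" "s1 \<in> II" "y \<in> {s0..s1}"
  then show "y \<in> II" using cf.in_I[of s0 s1 y] by simp
qed

lemma G_refl: "s \<in> II \<Longrightarrow> G s s = 0"
proof -
  assume s: "s \<in> II"
  have "G s s \<le> (r s)\<^sup>2 * (s - s) / 2" "0\<^sup>2 * (s - s) / 2 \<le> G s s"
    using G_bounds[of s s 0 "r s"] s r_mem[OF s] by auto
  then show "G s s = 0" by simp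
qed

lemma G_add:
  assumes "s0 \<in> II" "s2 \<in> II" "s0 \<le> s1" "s1 \<le> s2"
  shows "G s0 s2 = G s0 s1 + G s1 s2"
proof -
  have s1: "s1 \<in> II" using II_interval[OF assms(1,2)] assms by auto
  have un: "fan s0 s1 \<union> fan s1 s2 = fan s0 s2"
    using assms unfolding fan_def by fastforce
  have "fan s0 s1 \<inter> fan s1 s2 \<subseteq> span {d s1}"
  proof
    fix x assume "x \<in> fan s0 s1 \<inter> fan s1 s2"
    then have x1: "x \<in> fan s0 s1" and x2: "x \<in> fan s1 s2" by auto
    from x1 obtain t \<sigma> where xa: "x = t *\<^sub>R d \<sigma>" "\<sigma> \<le> s1" unfolding fan_def by auto
    from x2 obtain t' \<sigma>' where xb: "x = t' *\<^sub>R d \<sigma>'" "s1 \<le> \<sigma>'" unfolding fan_def by auto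
    note x = xa xb
    have "t = t'" using x ell_d by (metis bil_scale(1) mult.right_neutral)
    moreover have "t * \<sigma> = t' * \<sigma>'" using x cross_d by (metis cross_scale)
    ultimately have "t = 0 \<or> \<sigma> = s1" using x by auto
    then show "x \<in> span {d s1}" using x by (auto intro: span_mul span_base span_zero)
  qed
  moreover have "negligible (span {d s1})"
  proof (rule negligible_lowdim)
    have "dim (span {d s1}) \<le> 1" unfolding dim_span dim_singleton by simp
    moreover have "DIM(real \<times> real) = 2" by simp
    ultimately show "dim (span {d s1}) < DIM(real \<times> real)" by linarith
  qed
  ultimately have neg: "negligible (fan s0 s1 \<inter> fan s1 s2)" using negligible_subset by blast
  have l1: "fan s0 s1 \<in> lmeasurable" by (rule fan_lmeas[OF II_interval[OF assms(1) s1]])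
  have l2: "fan s1 s2 \<in> lmeasurable" by (rule fan_lmeas[OF II_interval[OF s1 assms(2)]])
  have l3: "({} :: (real \<times> real) set) \<in> lmeasurable" by simp
  have e1: "negligible (fan s0 s1 \<inter> {})" "negligible (fan s1 s2 \<inter> {})" by auto
  have un': "fan s0 s1 \<union> fan s1 s2 \<union> {} = fan s0 s2" using un by simp
  have "measure lebesgue (fan s0 s2) = measure lebesgue (fan s0 s1) + measure lebesgue (fan s1 s2) + measure lebesgue ({} :: (real \<times> real) set)"
    by (rule measure_Un3_negligible[OF l1 l2 l3 neg e1 un'])
  then show ?thesis by (simp add: G_def)
qed

definition Th where "Th s = (if 0 \<le> s then 2 * G 0 s else - 2 * G s 0)"

lemma Th_diff:
  assumes "s0 \<in> II" "s1 \<in> II" "s0 \<le> s1"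
  shows "Th s1 - Th s0 = 2 * G s0 s1"
proof -
  have z: "0 \<in> II" by (rule II_0)
  consider "0 \<le> s0" | "s0 < 0" "0 \<le> s1" | "s1 < 0" by linarith
  then show ?thesis
  proof cases
    case 1 then show ?thesis using G_add[OF z assms(2) 1 assms(3)] assms(3) by (simp add: Th_def)
  next
    case 2 then show ?thesis using G_add[OF assms(1,2), of 0] by (simp add: Th_def)
  next
    case 3 then show ?thesis using G_add[OF assms(1) z assms(3)] assms(3) by (simp add: Th_def)
  qed
qed

lemma Th_gap:
  assumes "s0 \<in> II" "s1 \<in> II" "s0 \<le> s1"
  shows "s1 - s0 \<le> Th s1 - Th s0"
proof -
  obtain M where M: "\<And>\<sigma>. \<sigma> \<in> {s0..s1} \<Longrightarrow> r \<sigma> \<le> M"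
  proof -
    have "compact (r ` {s0..s1})"
      by (rule compact_continuous_image) (use continuous_on_subset[OF r_cont II_interval[OF assms(1,2)]] in auto)
    then obtain M where "\<forall>x\<in>r ` {s0..s1}. x \<le> M" using compact_imp_bounded bounded_real
      by (metis abs_le_D1)
    then show ?thesis by (intro that[of M]) auto
  qed
  have b: "1 \<le> r \<sigma> \<and> r \<sigma> \<le> max M 1" if "\<sigma> \<in> {s0..s1}" for \<sigma>
  proof -
    have "\<sigma> \<in> II" using II_interval[OF assms(1,2)] that by blast
    then show ?thesis using r_mem M[OF that] by auto
  qed
  have "1\<^sup>2 * (s1 - s0) / 2 \<le> G s0 s1"
    by (rule G_bounds(1)[OF II_interval[OF assms(1,2)] assms(3) _ _ b]) auto
  then show ?thesis using Th_diff[OF assms] by simp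
qed

lemma Th_strict: "s0 \<in> II \<Longrightarrow> s1 \<in> II \<Longrightarrow> s0 < s1 \<Longrightarrow> Th s0 < Th s1"
  using Th_gap[of s0 s1] by simp

lemma Th_inj: "inj_on Th II"
  by (rule inj_onI) (metis Th_strict linorder_neqE_linordered_idom order_less_irrefl)

lemma Th_0: "Th 0 = 0" using G_refl[OF II_0(1)] by (simp add: Th_def)

lemma Th_deriv:
  assumes sI: "s \<in> II"
  shows "(Th has_real_derivative (r s)\<^sup>2) (at s)"
proof -
  have "isCont r s" using continuous_on_interior[OF r_cont] open_II sI by (simp add: interior_open)
  then have cont: "isCont (\<lambda>\<sigma>. (r \<sigma>)\<^sup>2) s" by (rule isCont_power)
  obtain e0 where e0: "e0 > 0" "ball s e0 \<subseteq> II" using open_II sI open_contains_ball by blast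
  show ?thesis unfolding has_field_derivative_iff LIM_eq
  proof (intro allI impI)
    fix \<epsilon> :: real assume \<epsilon>: "\<epsilon> > 0"
    obtain \<delta>1 where \<delta>1: "\<delta>1 > 0" "\<And>\<sigma>. dist \<sigma> s < \<delta>1 \<Longrightarrow> dist ((r \<sigma>)\<^sup>2) ((r s)\<^sup>2) < \<epsilon> / 2"
      using cont[unfolded continuous_at_eps_delta] \<epsilon> by (metis half_gt_zero)
    define \<delta> where "\<delta> = min \<delta>1 e0"
    have \<delta>: "\<delta> > 0" using \<delta>1 e0 by (simp add: \<delta>_def)
    define A where "A = max 0 ((r s)\<^sup>2 - \<epsilon> / 2)"
    define B where "B = (r s)\<^sup>2 + \<epsilon> / 2"
    have quot: "A \<le> 2 * G a b / (b - a) \<and> 2 * G a b / (b - a) \<le> B"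
      if ab: "a < b" "a \<in> ball s \<delta>" "b \<in> ball s \<delta>" for a b
    proof -
      have sub: "{a..b} \<subseteq> ball s \<delta>" using ab by (auto simp: dist_real_def)
      have "ball s \<delta> \<subseteq> II" using e0 by (auto simp: \<delta>_def)
      then have subII: "{a..b} \<subseteq> II" using sub by blast
      have bnd: "A \<le> (r \<sigma>)\<^sup>2 \<and> (r \<sigma>)\<^sup>2 \<le> B" if "\<sigma> \<in> {a..b}" for \<sigma>
      proof -
        have "dist \<sigma> s < \<delta>1" using sub that by (auto simp: \<delta>_def dist_commute)
        then have "\<bar>(r \<sigma>)\<^sup>2 - (r s)\<^sup>2\<bar> < \<epsilon> / 2" using \<delta>1(2) by (simp add: dist_real_def)
        then have "- (\<epsilon> / 2) < (r \<sigma>)\<^sup>2 - (r s)\<^sup>2" "(r \<sigma>)\<^sup>2 - (r s)\<^sup>2 < \<epsilon> / 2"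
          unfolding abs_less_iff by auto
        moreover have "0 \<le> (r \<sigma>)\<^sup>2" by simp
        ultimately show ?thesis unfolding A_def B_def by auto
      qed
      have rpos: "0 < r \<sigma>" if "\<sigma> \<in> {a..b}" for \<sigma> using r_mem subII that by blast
      have sA: "sqrt A \<le> r \<sigma> \<and> r \<sigma> \<le> sqrt B" if "\<sigma> \<in> {a..b}" for \<sigma>
      proof -
        have "sqrt A \<le> sqrt ((r \<sigma>)\<^sup>2)" "sqrt ((r \<sigma>)\<^sup>2) \<le> sqrt B"
          using bnd[OF that] by (auto intro!: real_sqrt_le_mono simp del: real_sqrt_abs)
        moreover have "sqrt ((r \<sigma>)\<^sup>2) = r \<sigma>" using rpos[OF that] by simp
        ultimately show ?thesis by simp
      qed
      have B0: "0 < sqrt B" using \<epsilon> by (simp add: B_def add_nonneg_pos)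
      have A0: "0 \<le> sqrt A" by (simp add: A_def)
      have g: "(sqrt A)\<^sup>2 * (b - a) / 2 \<le> G a b" "G a b \<le> (sqrt B)\<^sup>2 * (b - a) / 2"
        using G_bounds[OF subII _ A0 B0 sA] ab by auto
      have "(sqrt A)\<^sup>2 = A" "(sqrt B)\<^sup>2 = B" using \<epsilon> by (auto simp: A_def B_def add_nonneg_pos)
      with g have "A * (b - a) \<le> 2 * G a b" "2 * G a b \<le> B * (b - a)" by auto
      then show ?thesis using ab by (simp add: field_simps)
    qed
    have "\<bar>(Th y - Th s) / (y - s) - (r s)\<^sup>2\<bar> < \<epsilon>" if y: "y \<noteq> s" "\<bar>y - s\<bar> < \<delta>" for y
    proof -
      have yb: "y \<in> ball s \<delta>" using y by (simp add: dist_real_def abs_minus_commute)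
      have sb: "s \<in> ball s \<delta>" using \<delta> by simp
      have yII: "y \<in> II" using yb e0 by (auto simp: \<delta>_def)
      have q: "A \<le> (Th y - Th s) / (y - s) \<and> (Th y - Th s) / (y - s) \<le> B"
      proof (cases "s < y")
        case True
        then show ?thesis using quot[OF True sb yb] Th_diff[OF sI yII] by simp
      next
        case False
        then have ys: "y < s" using y by auto
        have "(Th y - Th s) / (y - s) = (Th s - Th y) / (s - y)"
          by (metis minus_diff_eq minus_divide_divide)
        then show ?thesis using quot[OF ys yb sb] Th_diff[OF yII sI] ys by simp
      qed
      have "(r s)\<^sup>2 - \<epsilon> / 2 \<le> A" by (simp add: A_def)
      then show ?thesis using q \<epsilon> unfolding B_def by linarith
    qed
    then show "\<exists>\<delta>>0. \<forall>x. x \<noteq> s \<and> norm (x - s) < \<delta> \<longrightarrow> norm ((Th x - Th s) / (x - s) - (r s)\<^sup>2) < \<epsilon>"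
      using \<delta> by auto
  qed
qed

end

lemma deriv_transfer:
  fixes f g :: "real \<Rightarrow> real"
  assumes "open J" "x \<in> J" "x \<in> S" "(f has_real_derivative D) (at x within S \<inter> J)"
    "\<And>y. y \<in> J \<Longrightarrow> f y = g y"
  shows "(g has_real_derivative D) (at x within S)"
proof -
  have "at x within S \<inter> J = at x within S"
    by (rule at_within_nhd[OF assms(2,1)]) auto
  then have f: "(f has_real_derivative D) (at x within S)" using assms(4) by simp
  obtain e where e: "e > 0" "ball x e \<subseteq> J" using assms(1,2) open_contains_ball by blast
  show ?thesis
    by (rule has_field_derivative_transform_within[OF f e(1) assms(3)])
       (use e assms(5) in \<open>auto simp: dist_commute subset_iff\<close>)
qed

lemma lip_quot:
  fixes f h :: "real \<Rightarrow> real"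
  assumes "\<bar>h a - h b\<bar> \<le> L * \<bar>a - b\<bar>" "\<bar>f a - f b\<bar> \<le> C * \<bar>a - b\<bar>"
    "m \<le> h a" "m \<le> h b" "0 < m" "\<bar>f a\<bar> \<le> B"
  shows "\<bar>f a / h a - f b / h b\<bar> \<le> (B * L / m\<^sup>2 + C / m) * \<bar>a - b\<bar>"
proof -
  have ha: "0 < h a" and hb: "0 < h b" using assms by auto
  have eq: "f a / h a - f b / h b = f a * (h b - h a) / (h a * h b) + (f a - f b) / h b"
    using ha hb by (simp add: field_simps)
  have L0: "0 \<le> L * \<bar>a - b\<bar>" using assms(1) by linarith
  have C0: "0 \<le> C * \<bar>a - b\<bar>" using assms(2) by linarith
  have "\<bar>f a * (h b - h a) / (h a * h b)\<bar> = \<bar>f a\<bar> * \<bar>h a - h b\<bar> / (h a * h b)"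
    using ha hb by (simp add: abs_mult abs_minus_commute)
  also have "\<dots> \<le> B * (L * \<bar>a - b\<bar>) / (m * m)"
  proof (rule frac_le)
    show "0 \<le> B * (L * \<bar>a - b\<bar>)" using assms(6) L0 by (simp add: order_trans[OF abs_ge_zero])
    show "\<bar>f a\<bar> * \<bar>h a - h b\<bar> \<le> B * (L * \<bar>a - b\<bar>)" using assms(1,6) by (intro mult_mono) auto
    show "0 < m * m" using assms(5) by simp
    show "m * m \<le> h a * h b" using assms(3,4,5) by (intro mult_mono) auto
  qed
  also have "\<dots> = B * L / m\<^sup>2 * \<bar>a - b\<bar>" by (simp add: power2_eq_square)
  finally have 1: "\<bar>f a * (h b - h a) / (h a * h b)\<bar> \<le> B * L / m\<^sup>2 * \<bar>a - b\<bar>" .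
  have "\<bar>(f a - f b) / h b\<bar> = \<bar>f a - f b\<bar> / h b" using hb by simp
  also have "\<dots> \<le> C * \<bar>a - b\<bar> / m" by (rule frac_le) (use assms C0 in auto)
  finally have 2: "\<bar>(f a - f b) / h b\<bar> \<le> C / m * \<bar>a - b\<bar>" by simp
  have "\<bar>f a / h a - f b / h b\<bar> \<le> \<bar>f a * (h b - h a) / (h a * h b)\<bar> + \<bar>(f a - f b) / h b\<bar>"
    unfolding eq by (rule abs_triangle_ineq)
  also have "\<dots> \<le> (B * L / m\<^sup>2 + C / m) * \<bar>a - b\<bar>" using 1 2 by (simp add: algebra_simps)
  finally show ?thesis .
qed

lemma affine_between:
  fixes A k a b x :: real
  assumes "a \<le> x" "x \<le> b"
  shows "min (A - k * a) (A - k * b) \<le> A - k * x \<and> A - k * x \<le> max (A - k * a) (A - k * b)"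
proof (cases "0 \<le> k")
  case True
  then have "k * a \<le> k * x" "k * x \<le> k * b" using assms by (auto intro: mult_left_mono)
  then show ?thesis by auto
next
  case False
  then have "k * x \<le> k * a" "k * b \<le> k * x" using assms by (auto intro: mult_left_mono_neg)
  then show ?thesis by auto
qed

context good_set
begin

lemma sector_iff:
  assumes s: "s \<in> II" and \<sigma>: "\<sigma> \<in> II"
  shows "om \<sigma> \<in> sector k0 (om s) \<longleftrightarrow> min 0 s \<le> \<sigma> \<and> \<sigma> \<le> max 0 s"
proof
  assume "om \<sigma> \<in> sector k0 (om s)"
  then obtain a b where ab: "om \<sigma> = a *\<^sub>R k0 + b *\<^sub>R om s" "0 \<le> a" "0 \<le> b"
    by (auto simp: sector_def)
  have e1: "r \<sigma> = a + b * r s" using arg_cong[OF ab(1), of "bil c"] ck0 by simp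
  have ck: "cross k0 k0 = 0" by (simp add: cross_def)
  have cc: "cross k0 (a *\<^sub>R k0 + b *\<^sub>R om s) = b * cross k0 (om s)"
    by (simp add: cross_def algebra_simps)
  have e2: "r \<sigma> * \<sigma> = b * (r s * s)"
    using arg_cong[OF ab(1), of "cross k0"] unfolding cc cross_om .
  define l where "l = b * r s / r \<sigma>"
  have rp: "0 < r \<sigma>" "0 < r s" using r_mem s \<sigma> by auto
  have l: "0 \<le> l" "l \<le> 1" using e1 ab rp by (auto simp: l_def field_simps)
  have "\<sigma> = l * s" using e2 rp by (simp add: l_def field_simps)
  then show "min 0 s \<le> \<sigma> \<and> \<sigma> \<le> max 0 s" using l
    by (cases "0 \<le> s") (auto simp: mult_left_le_one_le mult_nonneg_nonneg mult_le_0_iff mult_left_le_one_le[of s l])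
next
  assume b: "min 0 s \<le> \<sigma> \<and> \<sigma> \<le> max 0 s"
  define l where "l = (if s = 0 then 0 else \<sigma> / s)"
  have l: "0 \<le> l" "l \<le> 1" "\<sigma> = l * s"
    using b by (auto simp: l_def field_simps divide_le_eq_1 zero_le_divide_iff split: if_splits)
  have rp: "0 < r \<sigma>" "0 < r s" using r_mem s \<sigma> by auto
  have "om \<sigma> = (r \<sigma> * (1 - l)) *\<^sub>R k0 + (r \<sigma> * l / r s) *\<^sub>R om s"
  proof -
    have "(r \<sigma> * (1 - l)) *\<^sub>R k0 + (r \<sigma> * l / r s) *\<^sub>R om s = (r \<sigma> * (1 - l)) *\<^sub>R k0 + (r \<sigma> * l) *\<^sub>R d s"
      using rp by (simp add: om_def)
    also have "\<dots> = r \<sigma> *\<^sub>R (k0 + (l * s) *\<^sub>R bb)"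
      by (simp add: d_def algebra_simps)
    finally show ?thesis using l(3) by (simp add: om_def d_def)
  qed
  moreover have "0 \<le> r \<sigma> * (1 - l)" "0 \<le> r \<sigma> * l / r s" using rp l by auto
  ultimately show "om \<sigma> \<in> sector k0 (om s)" unfolding sector_def by blast
qed

lemma arc_eq:
  assumes s: "s \<in> II"
  shows "arc_region K k0 (om s) = fan (min 0 s) (max 0 s)"
proof -
  have sub: "{min 0 s .. max 0 s} \<subseteq> II" using II_interval II_0(1) s
    by (cases "0 \<le> s") auto
  show ?thesis
  proof
    show "arc_region K k0 (om s) \<subseteq> fan (min 0 s) (max 0 s)"
    proof
      fix x assume "x \<in> arc_region K k0 (om s)"
      then obtain t w where x: "x = t *\<^sub>R w" "0 \<le> t" "t \<le> 1" "w \<in> frontier K" "w \<in> sector k0 (om s)"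
        by (auto simp: arc_region_def)
      obtain \<sigma> where \<sigma>: "\<sigma> \<in> II" "w = om \<sigma>" using frontier_om[OF x(4)] by blast
      have b: "min 0 s \<le> \<sigma> \<and> \<sigma> \<le> max 0 s" using sector_iff[OF s \<sigma>(1)] x(5) \<sigma>(2) by simp
      have rp: "0 < r \<sigma>" using r_mem \<sigma> by auto
      have "x = (t * r \<sigma>) *\<^sub>R d \<sigma>" using x \<sigma> by (simp add: om_def)
      moreover have "t * r \<sigma> \<le> r \<sigma>" using x rp by (simp add: mult_left_le_one_le)
      moreover have "0 \<le> t * r \<sigma>" using x rp by simp
      ultimately show "x \<in> fan (min 0 s) (max 0 s)" unfolding fan_def using b by auto
    qed
    show "fan (min 0 s) (max 0 s) \<subseteq> arc_region K k0 (om s)"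
    proof
      fix x assume "x \<in> fan (min 0 s) (max 0 s)"
      then obtain t \<sigma> where x: "x = t *\<^sub>R d \<sigma>" "\<sigma> \<in> {min 0 s .. max 0 s}" "0 \<le> t" "t \<le> r \<sigma>"
        by (auto simp: fan_def)
      have \<sigma>: "\<sigma> \<in> II" using sub x(2) by blast
      have rp: "0 < r \<sigma>" using r_mem \<sigma> by auto
      have "x = (t / r \<sigma>) *\<^sub>R om \<sigma>" using x rp by (simp add: om_def)
      moreover have "om \<sigma> \<in> frontier K" by (rule om_frontier[OF \<sigma>])
      moreover have "om \<sigma> \<in> sector k0 (om s)" using sector_iff[OF s \<sigma>] x(2) by simp
      moreover have "0 \<le> t / r \<sigma>" "t / r \<sigma> \<le> 1" using x rp by auto
      ultimately show "x \<in> arc_region K k0 (om s)" unfolding arc_region_def by blast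
    qed
  qed
qed

lemma angle_om:
  assumes s: "s \<in> II"
  shows "conv_angle K k0 (om s) = Th s"
proof -
  have rp: "0 < r s" using r_mem s by auto
  have "0 \<le> cross k0 (om s) \<longleftrightarrow> 0 \<le> s" using rp by (simp add: zero_le_mult_iff)
  then show ?thesis
    unfolding conv_angle_def arc_eq[OF s] Th_def G_def by (cases "0 \<le> s") auto
qed

lemma domain_eq: "conv_domain K k0 = Th ` II"
  unfolding conv_domain_def frontier_eq image_image using angle_om by simp

lemma point_eq:
  assumes s: "s \<in> II"
  shows "conv_point K k0 (Th s) = om s"
  unfolding conv_point_def
proof (rule the_equality)
  show "om s \<in> frontier K \<and> conv_angle K k0 (om s) = Th s" using om_frontier s angle_om by auto
next
  fix w assume w: "w \<in> frontier K \<and> conv_angle K k0 w = Th s"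
  then obtain \<sigma> where \<sigma>: "\<sigma> \<in> II" "w = om \<sigma>" using frontier_om by blast
  then have "Th \<sigma> = Th s" using w angle_om by simp
  then have "\<sigma> = s" using Th_inj \<sigma>(1) s by (auto dest: inj_onD)
  then show "w = om s" using \<sigma> by simp
qed

definition J where "J = Th ` II"
definition phi where "phi \<theta> = inv_into II Th \<theta>"

lemma phi_Th [simp]: "s \<in> II \<Longrightarrow> phi (Th s) = s"
  unfolding phi_def by (rule inv_into_f_f[OF Th_inj])

lemma phi_in: "\<theta> \<in> J \<Longrightarrow> phi \<theta> \<in> II"
  unfolding phi_def J_def by (rule inv_into_into)

lemma Th_phi [simp]: "\<theta> \<in> J \<Longrightarrow> Th (phi \<theta>) = \<theta>"
  unfolding phi_def J_def by (rule f_inv_into_f)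

lemma phi_mono: "\<theta>1 \<in> J \<Longrightarrow> \<theta>2 \<in> J \<Longrightarrow> \<theta>1 \<le> \<theta>2 \<Longrightarrow> phi \<theta>1 \<le> phi \<theta>2"
  by (metis Th_phi Th_strict not_le phi_in)

lemma phi_lip: "\<theta>1 \<in> J \<Longrightarrow> \<theta>2 \<in> J \<Longrightarrow> \<bar>phi \<theta>1 - phi \<theta>2\<bar> \<le> \<bar>\<theta>1 - \<theta>2\<bar>"
proof -
  have *: "\<bar>phi a - phi b\<bar> \<le> \<bar>a - b\<bar>" if "a \<in> J" "b \<in> J" "a \<le> b" for a b
  proof -
    have "phi a \<le> phi b" using phi_mono that by blast
    then have "phi b - phi a \<le> Th (phi b) - Th (phi a)" using Th_gap phi_in that by blast
    then show ?thesis using that \<open>phi a \<le> phi b\<close> by simp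
  qed
  assume "\<theta>1 \<in> J" "\<theta>2 \<in> J"
  then show ?thesis using *[of \<theta>1 \<theta>2] *[of \<theta>2 \<theta>1] by (cases "\<theta>1 \<le> \<theta>2") (auto simp: abs_minus_commute)
qed

lemma Th_cont: "continuous_on II Th"
  using Th_deriv DERIV_isCont continuous_at_imp_continuous_on by blast

lemma open_J: "open J"
proof -
  have "\<exists>e>0. ball \<theta> e \<subseteq> J" if th: "\<theta> \<in> J" for \<theta>
  proof -
    obtain s where s: "s \<in> II" "\<theta> = Th s" using th by (auto simp: J_def)
    obtain e where e: "e > 0" "ball s e \<subseteq> II" using open_II s open_contains_ball by blast
    define a where "a = s - e / 2"
    define b where "b = s + e / 2"
    have ab: "a \<in> II" "b \<in> II" "a < s" "s < b" "a \<le> b"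
      using e by (auto simp: a_def b_def dist_real_def subset_iff)
    have lt: "Th a < \<theta>" "\<theta> < Th b" using Th_strict ab s by auto
    define \<epsilon> where "\<epsilon> = min (\<theta> - Th a) (Th b - \<theta>)"
    have \<epsilon>: "\<epsilon> > 0" using lt by (simp add: \<epsilon>_def)
    have "ball \<theta> \<epsilon> \<subseteq> J"
    proof
      fix y assume "y \<in> ball \<theta> \<epsilon>"
      then have y: "Th a \<le> y" "y \<le> Th b" by (auto simp: \<epsilon>_def dist_real_def)
      have "continuous_on {a..b} Th" using continuous_on_subset[OF Th_cont II_interval[OF ab(1,2)]] .
      then obtain x where x: "a \<le> x" "x \<le> b" "Th x = y" using IVT'[OF y ab(5)] by blast
      have "x \<in> II" using II_interval[OF ab(1,2)] x by auto
      then show "y \<in> J" using x by (auto simp: J_def)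
    qed
    then show ?thesis using \<epsilon> by blast
  qed
  then show ?thesis by (simp add: open_contains_ball)
qed

lemma phi_cont: "\<theta> \<in> J \<Longrightarrow> isCont phi \<theta>"
proof -
  assume \<theta>: "\<theta> \<in> J"
  obtain e0 where e0: "e0 > 0" "ball \<theta> e0 \<subseteq> J" using open_J \<theta> open_contains_ball by blast
  show "isCont phi \<theta>" unfolding continuous_at_eps_delta
  proof (intro allI impI)
    fix e :: real assume e: "e > 0"
    show "\<exists>d>0. \<forall>x'. dist x' \<theta> < d \<longrightarrow> dist (phi x') (phi \<theta>) < e"
    proof (intro exI[of _ "min e e0"] conjI allI impI)
      fix x' assume "dist x' \<theta> < min e e0"
      then have "x' \<in> J" "dist x' \<theta> < e" using e0 by (auto simp: dist_commute subset_iff)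
      then show "dist (phi x') (phi \<theta>) < e" using phi_lip[OF _ \<theta>] by (force simp: dist_real_def)
    qed (use e e0 in auto)
  qed
qed

lemma phi_deriv:
  assumes \<theta>: "\<theta> \<in> J"
  shows "(phi has_real_derivative (hh (phi \<theta>))\<^sup>2) (at \<theta>)"
proof -
  obtain e0 where e0: "e0 > 0" "ball \<theta> e0 \<subseteq> J" using open_J \<theta> open_contains_ball by blast
  have s: "phi \<theta> \<in> II" by (rule phi_in[OF \<theta>])
  have D: "(Th has_real_derivative (r (phi \<theta>))\<^sup>2) (at (phi \<theta>))" by (rule Th_deriv[OF s])
  have "(phi has_real_derivative inverse ((r (phi \<theta>))\<^sup>2)) (at \<theta>)"
  proof (rule DERIV_inverse_function[where f=Th and g=phi and x=\<theta>, OF D])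
    show "(r (phi \<theta>))\<^sup>2 \<noteq> 0" using r_mem[OF s] by simp
    show "\<theta> - e0 < \<theta>" "\<theta> < \<theta> + e0" using e0 by auto
    show "Th (phi y) = y" if "\<theta> - e0 < y" "y < \<theta> + e0" for y
    proof -
      have "y \<in> J" using that e0 by (auto simp: dist_real_def subset_iff)
      then show ?thesis by simp
    qed
    show "isCont phi \<theta>" by (rule phi_cont[OF \<theta>])
  qed
  moreover have "inverse ((r (phi \<theta>))\<^sup>2) = (hh (phi \<theta>))\<^sup>2"
    by (simp add: hh_def power_one_over inverse_eq_divide)
  ultimately show ?thesis by simp
qed

definition X where "X s = fst (d s) / hh s"
definition Y where "Y s = snd (d s) / hh s"

lemma om_XY: "s \<in> II \<Longrightarrow> fst (om s) = X s \<and> snd (om s) = Y s"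
  using r_hh by (simp add: om_def X_def Y_def)

lemma cosh_eq: "\<theta> \<in> J \<Longrightarrow> cosh_conv K k0 \<theta> = X (phi \<theta>)"
  using point_eq[OF phi_in] om_XY[OF phi_in] by (simp add: cosh_conv_def)

lemma sinh_eq: "\<theta> \<in> J \<Longrightarrow> sinh_conv K k0 \<theta> = Y (phi \<theta>)"
  using point_eq[OF phi_in] om_XY[OF phi_in] by (simp add: sinh_conv_def)

lemma J_eq: "conv_domain K k0 = J" by (simp add: domain_eq J_def)

definition Pi where
  "Pi s \<beta> = (snd bb * hh s - snd (d s) * \<beta>, fst bb * hh s - fst (d s) * \<beta>)"

lemma d1_deriv: "((\<lambda>s. fst (d s)) has_real_derivative fst bb) (at s within S)"
  unfolding d_def by (auto intro!: derivative_eq_intros)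
lemma d2_deriv: "((\<lambda>s. snd (d s)) has_real_derivative snd bb) (at s within S)"
  unfolding d_def by (auto intro!: derivative_eq_intros)

lemma X_deriv_gen:
  assumes s: "s \<in> II" and hd: "(hh has_real_derivative D) (at s within S)"
  shows "(X has_real_derivative (snd (Pi s D)) / (hh s)\<^sup>2) (at s within S)"
    and "(Y has_real_derivative (fst (Pi s D)) / (hh s)\<^sup>2) (at s within S)"
proof -
  have h0: "hh s \<noteq> 0" using hh_pos[OF s] by simp
  show "(X has_real_derivative (snd (Pi s D)) / (hh s)\<^sup>2) (at s within S)"
    unfolding X_def using DERIV_divide[OF d1_deriv hd h0]
    by (simp add: Pi_def power2_eq_square mult.commute)
  show "(Y has_real_derivative (fst (Pi s D)) / (hh s)\<^sup>2) (at s within S)"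
    unfolding Y_def using DERIV_divide[OF d2_deriv hd h0]
    by (simp add: Pi_def power2_eq_square mult.commute)
qed

lemma compose_phi:
  assumes \<theta>: "\<theta> \<in> J" and S: "\<And>x. x \<in> S \<inter> J \<Longrightarrow> phi x \<in> T"
    and F: "(F has_real_derivative E) (at (phi \<theta>) within T)"
  shows "((\<lambda>x. F (phi x)) has_real_derivative E * (hh (phi \<theta>))\<^sup>2) (at \<theta> within S \<inter> J)"
proof -
  have F': "(F has_real_derivative E) (at (phi \<theta>) within phi ` (S \<inter> J))"
    by (rule has_field_derivative_subset[OF F]) (use S in auto)
  have P: "(phi has_real_derivative (hh (phi \<theta>))\<^sup>2) (at \<theta> within S \<inter> J)"
    using phi_deriv[OF \<theta>] by (rule has_field_derivative_at_within)
  show ?thesis using DERIV_image_chain[OF F' P] by (simp add: o_def)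
qed

lemma cosh_right:
  assumes \<theta>: "\<theta> \<in> J"
  shows "(cosh_conv K k0 has_real_derivative snd (Pi (phi \<theta>) (cf.Dp (phi \<theta>)))) (at \<theta> within {\<theta>..})"
    and "(sinh_conv K k0 has_real_derivative fst (Pi (phi \<theta>) (cf.Dp (phi \<theta>)))) (at \<theta> within {\<theta>..})"
proof -
  let ?s = "phi \<theta>"
  have s: "?s \<in> II" by (rule phi_in[OF \<theta>])
  have h0: "(hh ?s)\<^sup>2 \<noteq> 0" using hh_pos[OF s] by simp
  have S: "phi x \<in> {?s..}" if "x \<in> {\<theta>..} \<inter> J" for x using phi_mono[OF \<theta>] that by auto
  have hd: "(hh has_real_derivative cf.Dp ?s) (at ?s within {?s..})" by (rule cf.right_deriv[OF s])
  show "(cosh_conv K k0 has_real_derivative snd (Pi ?s (cf.Dp ?s))) (at \<theta> within {\<theta>..})"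
  proof (rule deriv_transfer[OF open_J \<theta>])
    show "((\<lambda>x. X (phi x)) has_real_derivative snd (Pi ?s (cf.Dp ?s))) (at \<theta> within {\<theta>..} \<inter> J)"
      using compose_phi[where S="{\<theta>..}", OF \<theta> S X_deriv_gen(1)[OF s hd]] h0 by simp
  qed (auto simp: cosh_eq)
  show "(sinh_conv K k0 has_real_derivative fst (Pi ?s (cf.Dp ?s))) (at \<theta> within {\<theta>..})"
  proof (rule deriv_transfer[OF open_J \<theta>])
    show "((\<lambda>x. Y (phi x)) has_real_derivative fst (Pi ?s (cf.Dp ?s))) (at \<theta> within {\<theta>..} \<inter> J)"
      using compose_phi[where S="{\<theta>..}", OF \<theta> S X_deriv_gen(2)[OF s hd]] h0 by simp
  qed (auto simp: sinh_eq)
qed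

lemma cosh_left:
  assumes \<theta>: "\<theta> \<in> J"
  shows "(cosh_conv K k0 has_real_derivative snd (Pi (phi \<theta>) (cf.Dm (phi \<theta>)))) (at \<theta> within {..\<theta>})"
    and "(sinh_conv K k0 has_real_derivative fst (Pi (phi \<theta>) (cf.Dm (phi \<theta>)))) (at \<theta> within {..\<theta>})"
proof -
  let ?s = "phi \<theta>"
  have s: "?s \<in> II" by (rule phi_in[OF \<theta>])
  have h0: "(hh ?s)\<^sup>2 \<noteq> 0" using hh_pos[OF s] by simp
  have S: "phi x \<in> {..?s}" if "x \<in> {..\<theta>} \<inter> J" for x using phi_mono[OF _ \<theta>] that by auto
  have hd: "(hh has_real_derivative cf.Dm ?s) (at ?s within {..?s})" by (rule cf.left_deriv[OF s])
  show "(cosh_conv K k0 has_real_derivative snd (Pi ?s (cf.Dm ?s))) (at \<theta> within {..\<theta>})"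
  proof (rule deriv_transfer[OF open_J \<theta>])
    show "((\<lambda>x. X (phi x)) has_real_derivative snd (Pi ?s (cf.Dm ?s))) (at \<theta> within {..\<theta>} \<inter> J)"
      using compose_phi[where S="{..\<theta>}", OF \<theta> S X_deriv_gen(1)[OF s hd]] h0 by simp
  qed (auto simp: cosh_eq)
  show "(sinh_conv K k0 has_real_derivative fst (Pi ?s (cf.Dm ?s))) (at \<theta> within {..\<theta>})"
  proof (rule deriv_transfer[OF open_J \<theta>])
    show "((\<lambda>x. Y (phi x)) has_real_derivative fst (Pi ?s (cf.Dm ?s))) (at \<theta> within {..\<theta>} \<inter> J)"
      using compose_phi[where S="{..\<theta>}", OF \<theta> S X_deriv_gen(2)[OF s hd]] h0 by simp
  qed (auto simp: sinh_eq)
qed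

lemma cosh_both:
  assumes \<theta>: "\<theta> \<in> J" and eq: "cf.Dp (phi \<theta>) = cf.Dm (phi \<theta>)"
  shows "(cosh_conv K k0 has_real_derivative snd (Pi (phi \<theta>) (cf.Dp (phi \<theta>)))) (at \<theta>)"
    and "(sinh_conv K k0 has_real_derivative fst (Pi (phi \<theta>) (cf.Dp (phi \<theta>)))) (at \<theta>)"
proof -
  let ?s = "phi \<theta>"
  have s: "?s \<in> II" by (rule phi_in[OF \<theta>])
  have h0: "(hh ?s)\<^sup>2 \<noteq> 0" using hh_pos[OF s] by simp
  have S: "phi x \<in> UNIV" if "x \<in> UNIV \<inter> J" for x by simp
  have hd: "(hh has_real_derivative cf.Dp ?s) (at ?s within UNIV)" using cf.both_deriv[OF s eq] by simp
  have "(cosh_conv K k0 has_real_derivative snd (Pi ?s (cf.Dp ?s))) (at \<theta> within UNIV)"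
  proof (rule deriv_transfer[OF open_J \<theta>])
    show "((\<lambda>x. X (phi x)) has_real_derivative snd (Pi ?s (cf.Dp ?s))) (at \<theta> within UNIV \<inter> J)"
      using compose_phi[where S=UNIV, OF \<theta> S X_deriv_gen(1)[OF s hd]] h0 by simp
  qed (auto simp: cosh_eq)
  then show "(cosh_conv K k0 has_real_derivative snd (Pi ?s (cf.Dp ?s))) (at \<theta>)" by simp
  have "(sinh_conv K k0 has_real_derivative fst (Pi ?s (cf.Dp ?s))) (at \<theta> within UNIV)"
  proof (rule deriv_transfer[OF open_J \<theta>])
    show "((\<lambda>x. Y (phi x)) has_real_derivative fst (Pi ?s (cf.Dp ?s))) (at \<theta> within UNIV \<inter> J)"
      using compose_phi[where S=UNIV, OF \<theta> S X_deriv_gen(2)[OF s hd]] h0 by simp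
  qed (auto simp: sinh_eq)
  then show "(sinh_conv K k0 has_real_derivative fst (Pi ?s (cf.Dp ?s))) (at \<theta>)" by simp
qed

end

lemma fst_le_norm: "\<bar>fst (x::real \<times> real)\<bar> \<le> norm x"
proof -
  have "\<bar>fst x\<bar> = sqrt ((fst x)\<^sup>2)" by simp
  also have "\<dots> \<le> sqrt ((fst x)\<^sup>2 + (snd x)\<^sup>2)" by (rule real_sqrt_le_mono) simp
  also have "\<dots> = norm x" by (simp add: norm_prod_def)
  finally show ?thesis .
qed

lemma snd_le_norm: "\<bar>snd (x::real \<times> real)\<bar> \<le> norm x"
proof -
  have "\<bar>snd x\<bar> = sqrt ((snd x)\<^sup>2)" by simp
  also have "\<dots> \<le> sqrt ((fst x)\<^sup>2 + (snd x)\<^sup>2)" by (rule real_sqrt_le_mono) simp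
  also have "\<dots> = norm x" by (simp add: norm_prod_def)
  finally show ?thesis .
qed

context good_set
begin

lemma bil_d: "bil \<pi> (d \<sigma>) = bil \<pi> k0 + \<sigma> * bil \<pi> bb"
  by (simp add: d_def)

lemma bil_Pi_d: "bil (Pi s \<beta>) (d \<sigma>) = hh s + (\<sigma> - s) * \<beta>"
proof -
  have "bil (Pi s \<beta>) (d \<sigma>) = (hh s + (\<sigma> - s) * \<beta>) * (fst c * fst k0 - snd c * snd k0)"
    by (simp add: Pi_def bil_def d_def bb_def algebra_simps)
  then show ?thesis using ck0' by simp
qed

lemma support_char:
  assumes s: "s \<in> II" and \<pi>: "\<pi> \<in> antipolar K" and one: "bil \<pi> (om s) = 1"
  shows "\<exists>\<beta>. cf.Dp s \<le> \<beta> \<and> \<beta> \<le> cf.Dm s \<and> \<pi> = Pi s \<beta>"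
proof -
  define \<alpha> where "\<alpha> = bil \<pi> k0"
  define \<beta> where "\<beta> = bil \<pi> bb"
  have bd: "bil \<pi> (d \<sigma>) = \<alpha> + \<sigma> * \<beta>" for \<sigma> by (simp add: bil_d \<alpha>_def \<beta>_def)
  have ge: "hh \<sigma> \<le> \<alpha> + \<sigma> * \<beta>" if "\<sigma> \<in> II" for \<sigma>
  proof -
    have "1 \<le> bil \<pi> (om \<sigma>)" using \<pi> om_K[OF that] by (auto simp: antipolar_iff)
    then have "1 \<le> r \<sigma> * (\<alpha> + \<sigma> * \<beta>)" by (simp add: om_def bd)
    then show ?thesis using r_mem[OF that] by (simp add: hh_def divide_le_eq mult.commute)
  qed
  have eqs: "\<alpha> + s * \<beta> = hh s"
  proof -
    have "r s * (\<alpha> + s * \<beta>) = 1" using one by (simp add: om_def bd)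
    then show ?thesis using r_mem[OF s] by (simp add: hh_def field_simps)
  qed
  have "\<forall>t\<in>II. hh t \<le> hh s + \<beta> * (t - s)"
  proof
    fix t assume t: "t \<in> II"
    have "\<beta> * (t - s) = t * \<beta> - s * \<beta>" by (simp add: algebra_simps)
    then show "hh t \<le> hh s + \<beta> * (t - s)" using ge[OF t] eqs by linarith
  qed
  then have b: "cf.Dp s \<le> \<beta> \<and> \<beta> \<le> cf.Dm s" using cf.supgrad_iff[OF s] by blast
  have p1: "fst c * \<alpha> - snd k0 * \<beta> = fst \<pi> * (fst c * fst k0 - snd c * snd k0)"
    by (simp add: \<alpha>_def \<beta>_def bil_def bb_def algebra_simps)
  have p2: "snd c * \<alpha> - fst k0 * \<beta> = snd \<pi> * (fst c * fst k0 - snd c * snd k0)"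
    by (simp add: \<alpha>_def \<beta>_def bil_def bb_def algebra_simps)
  have "\<pi> = Pi s \<beta>"
  proof -
    have "fst (Pi s \<beta>) = fst c * \<alpha> - snd k0 * \<beta>"
      unfolding Pi_def eqs[symmetric] by (simp add: bb_def d_def algebra_simps)
    moreover have "snd (Pi s \<beta>) = snd c * \<alpha> - fst k0 * \<beta>"
      unfolding Pi_def eqs[symmetric] by (simp add: bb_def d_def algebra_simps)
    ultimately show ?thesis using p1 p2 ck0' by (simp add: prod_eq_iff)
  qed
  then show ?thesis using b by blast
qed

lemma Pi_support:
  assumes s: "s \<in> II" and b: "cf.Dp s \<le> \<beta>" "\<beta> \<le> cf.Dm s"
  shows "Pi s \<beta> \<in> antipolar K" "bil (Pi s \<beta>) (om s) = 1"
proof -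
  have sg: "\<forall>t\<in>II. hh t \<le> hh s + \<beta> * (t - s)" using cf.supgrad_iff[OF s] b by blast
  show "Pi s \<beta> \<in> antipolar K" unfolding antipolar_iff
  proof
    fix w assume wK: "w \<in> K"
    define t where "t = bil c w"
    define \<sigma> where "\<sigma> = cross k0 w / t"
    have t1: "1 \<le> t" using lowK[OF wK] by (simp add: t_def)
    have w: "w = t *\<^sub>R d \<sigma>" unfolding \<sigma>_def t_def using t1 t_def by (intro decomp) simp
    then have \<sigma>I: "\<sigma> \<in> II" "r \<sigma> \<le> t" using mem_iff[of t \<sigma>] t1 wK by auto
    have "hh \<sigma> \<le> hh s + (\<sigma> - s) * \<beta>" using sg \<sigma>I by (auto simp: algebra_simps)
    then have "t * hh \<sigma> \<le> t * (hh s + (\<sigma> - s) * \<beta>)" using t1 by (intro mult_left_mono) auto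
    moreover have "r \<sigma> * hh \<sigma> \<le> t * hh \<sigma>" using \<sigma>I hh_pos[OF \<sigma>I(1)] by (intro mult_right_mono) auto
    moreover have "r \<sigma> * hh \<sigma> = 1" using r_mem[OF \<sigma>I(1)] by (simp add: hh_def)
    moreover have "bil (Pi s \<beta>) w = t * (hh s + (\<sigma> - s) * \<beta>)" using w by (simp add: bil_Pi_d)
    ultimately show "1 \<le> bil (Pi s \<beta>) w" by linarith
  qed
  show "bil (Pi s \<beta>) (om s) = 1"
    using r_mem[OF s] by (simp add: om_def bil_Pi_d hh_def)
qed

lemma d_nz: "d s \<noteq> 0" using ell_d[of s] by (auto simp: bil_def)

lemma Pi_inj: "Pi s \<beta>1 = Pi s \<beta>2 \<Longrightarrow> \<beta>1 = \<beta>2"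
proof -
  assume e: "Pi s \<beta>1 = Pi s \<beta>2"
  then have "snd (d s) * (\<beta>1 - \<beta>2) = 0" "fst (d s) * (\<beta>1 - \<beta>2) = 0"
    by (auto simp: Pi_def prod_eq_iff algebra_simps)
  then show "\<beta>1 = \<beta>2" using d_nz[of s] by (auto simp: prod_eq_iff)
qed

lemma antipolar_frontier:
  assumes \<pi>: "\<pi> \<in> antipolar K" and w: "w \<in> K" and one: "bil \<pi> w = 1"
  shows "\<pi> \<in> frontier (antipolar K)"
proof -
  have "\<pi> \<notin> interior (antipolar K)"
  proof
    assume "\<pi> \<in> interior (antipolar K)"
    then obtain e where e: "e > 0" "ball \<pi> e \<subseteq> antipolar K" using mem_interior by blast
    define \<delta> where "\<delta> = e / (2 * (norm \<pi> + 1))"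
    have \<delta>: "0 < \<delta>" using e by (simp add: \<delta>_def add_nonneg_pos)
    have "\<delta> * norm \<pi> < e"
    proof -
      have "\<delta> * norm \<pi> = e * (norm \<pi> / (2 * (norm \<pi> + 1)))" by (simp add: \<delta>_def)
      also have "\<dots> < e * 1" by (rule mult_strict_left_mono[OF frac_lt1]) (use e in auto)
      finally show ?thesis by simp
    qed
    then have "(1 - \<delta>) *\<^sub>R \<pi> \<in> ball \<pi> e" using \<delta> by (simp add: dist_norm algebra_simps)
    then have "(1 - \<delta>) *\<^sub>R \<pi> \<in> antipolar K" using e by blast
    then have "1 \<le> bil ((1 - \<delta>) *\<^sub>R \<pi>) w" using w by (auto simp: antipolar_iff)
    then show False using one \<delta> by simp
  qed
  then show ?thesis using \<pi> closure_subset by (auto simp: frontier_def)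
qed

lemma hh_le1: "s \<in> II \<Longrightarrow> hh s \<le> 1" using r_mem by (simp add: hh_def)

lemma XY_lip:
  assumes s: "s \<in> II"
  obtains e L where "e > 0" "{s - e .. s + e} \<subseteq> II"
    "\<And>a b. a \<in> {s - e .. s + e} \<Longrightarrow> b \<in> {s - e .. s + e} \<Longrightarrow> \<bar>X a - X b\<bar> \<le> L * \<bar>a - b\<bar> \<and> \<bar>Y a - Y b\<bar> \<le> L * \<bar>a - b\<bar>"
proof -
  obtain e L where e: "e > 0" "{s - e .. s + e} \<subseteq> II"
    and lip: "\<And>a b. a \<in> {s - e .. s + e} \<Longrightarrow> b \<in> {s - e .. s + e} \<Longrightarrow> \<bar>hh a - hh b\<bar> \<le> L * \<bar>a - b\<bar>"
    using cf.local_lipschitz[OF s] by blast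
  have "\<exists>x\<in>{s - e .. s + e}. \<forall>y\<in>{s - e .. s + e}. hh x \<le> hh y"
    by (rule continuous_attains_inf) (use e continuous_on_subset[OF cf.continuous e(2)] in auto)
  then obtain x0 where x0: "x0 \<in> {s - e .. s + e}" "\<And>y. y \<in> {s - e .. s + e} \<Longrightarrow> hh x0 \<le> hh y" by blast
  define m where "m = hh x0"
  have m: "0 < m" using hh_pos x0 e(2) by (auto simp: m_def)
  have mle: "\<And>y. y \<in> {s - e .. s + e} \<Longrightarrow> m \<le> hh y" using x0(2) by (simp add: m_def)
  define B where "B = norm k0 + (\<bar>s\<bar> + e) * norm bb"
  have Bd: "\<bar>fst (d a)\<bar> \<le> B \<and> \<bar>snd (d a)\<bar> \<le> B" if "a \<in> {s - e .. s + e}" for a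
  proof -
    have "norm (d a) \<le> norm k0 + \<bar>a\<bar> * norm bb" unfolding d_def
      using norm_triangle_ineq[of k0 "a *\<^sub>R bb"] by simp
    also have "\<dots> \<le> B" unfolding B_def using that by (intro add_left_mono mult_right_mono) auto
    finally show ?thesis by (meson dual_order.trans fst_le_norm snd_le_norm)
  qed
  have C1: "\<bar>fst (d a) - fst (d b)\<bar> \<le> norm bb * \<bar>a - b\<bar>" for a b
  proof -
    have "\<bar>fst (d a) - fst (d b)\<bar> = \<bar>a - b\<bar> * \<bar>fst bb\<bar>" by (simp add: d_def algebra_simps abs_mult[symmetric])
    also have "\<dots> \<le> \<bar>a - b\<bar> * norm bb" by (intro mult_left_mono) (auto simp: fst_le_norm)
    finally show ?thesis by (simp add: mult.commute)
  qed
  have C2: "\<bar>snd (d a) - snd (d b)\<bar> \<le> norm bb * \<bar>a - b\<bar>" for a b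
  proof -
    have "\<bar>snd (d a) - snd (d b)\<bar> = \<bar>a - b\<bar> * \<bar>snd bb\<bar>" by (simp add: d_def algebra_simps abs_mult[symmetric])
    also have "\<dots> \<le> \<bar>a - b\<bar> * norm bb" by (intro mult_left_mono) (auto simp: snd_le_norm)
    finally show ?thesis by (simp add: mult.commute)
  qed
  define L' where "L' = B * L / m\<^sup>2 + norm bb / m"
  show ?thesis
  proof (rule that[OF e, of L'])
    fix a b assume ab: "a \<in> {s - e .. s + e}" "b \<in> {s - e .. s + e}"
    show "\<bar>X a - X b\<bar> \<le> L' * \<bar>a - b\<bar> \<and> \<bar>Y a - Y b\<bar> \<le> L' * \<bar>a - b\<bar>"
      unfolding X_def Y_def L'_def
      using lip_quot[of hh a b L "\<lambda>a. fst (d a)" "norm bb" m B, OF lip[OF ab] C1 mle[OF ab(1)] mle[OF ab(2)]]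
            lip_quot[of hh a b L "\<lambda>a. snd (d a)" "norm bb" m B, OF lip[OF ab] C2 mle[OF ab(1)] mle[OF ab(2)]]
            m Bd[OF ab(1)] by simp
  qed
qed

lemma lip_comp:
  assumes F: "\<And>s. s \<in> II \<Longrightarrow> \<exists>e>0. \<exists>L. \<forall>a\<in>{s - e .. s + e}. \<forall>b\<in>{s - e .. s + e}. \<bar>F a - F b\<bar> \<le> L * \<bar>a - b\<bar>"
    and G: "\<And>\<theta>. \<theta> \<in> J \<Longrightarrow> Gf \<theta> = F (phi \<theta>)"
  shows "loc_lipschitz_on J Gf"
  unfolding loc_lipschitz_on_def
proof
  fix \<theta> assume \<theta>: "\<theta> \<in> J"
  obtain e L where e: "e > 0" and L: "\<forall>a\<in>{phi \<theta> - e .. phi \<theta> + e}. \<forall>b\<in>{phi \<theta> - e .. phi \<theta> + e}. \<bar>F a - F b\<bar> \<le> L * \<bar>a - b\<bar>"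
    using F[OF phi_in[OF \<theta>]] by blast
  have "\<forall>a\<in>J \<inter> ball \<theta> e. \<forall>b\<in>J \<inter> ball \<theta> e. \<bar>Gf a - Gf b\<bar> \<le> max L 0 * \<bar>a - b\<bar>"
  proof (intro ballI)
    fix a b assume a: "a \<in> J \<inter> ball \<theta> e" and b: "b \<in> J \<inter> ball \<theta> e"
    have pa: "phi a \<in> {phi \<theta> - e .. phi \<theta> + e}"
      using phi_lip[of a \<theta>] a \<theta> by (auto simp: dist_real_def abs_minus_commute abs_le_iff)
    have pb: "phi b \<in> {phi \<theta> - e .. phi \<theta> + e}"
      using phi_lip[of b \<theta>] b \<theta> by (auto simp: dist_real_def abs_minus_commute abs_le_iff)
    have "\<bar>Gf a - Gf b\<bar> = \<bar>F (phi a) - F (phi b)\<bar>" using a b G by auto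
    also have "\<dots> \<le> L * \<bar>phi a - phi b\<bar>" using L pa pb by blast
    also have "\<dots> \<le> max L 0 * \<bar>phi a - phi b\<bar>" by (intro mult_right_mono) auto
    also have "\<dots> \<le> max L 0 * \<bar>a - b\<bar>" using phi_lip[of a b] a b by (intro mult_left_mono) auto
    finally show "\<bar>Gf a - Gf b\<bar> \<le> max L 0 * \<bar>a - b\<bar>" .
  qed
  then show "\<exists>e>0. \<exists>L. \<forall>a\<in>J \<inter> ball \<theta> e. \<forall>b\<in>J \<inter> ball \<theta> e. \<bar>Gf a - Gf b\<bar> \<le> L * \<bar>a - b\<bar>"
    using e by blast
qed

lemma cosh_lip: "loc_lipschitz_on J (cosh_conv K k0)"
proof (rule lip_comp[where F=X])
  fix s assume s: "s \<in> II"
  obtain e L where "e > 0" "\<And>a b. a \<in> {s - e .. s + e} \<Longrightarrow> b \<in> {s - e .. s + e} \<Longrightarrow> \<bar>X a - X b\<bar> \<le> L * \<bar>a - b\<bar> \<and> \<bar>Y a - Y b\<bar> \<le> L * \<bar>a - b\<bar>"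
    using XY_lip[OF s] by metis
  then show "\<exists>e>0. \<exists>L. \<forall>a\<in>{s - e .. s + e}. \<forall>b\<in>{s - e .. s + e}. \<bar>X a - X b\<bar> \<le> L * \<bar>a - b\<bar>" by blast
qed (rule cosh_eq)

lemma sinh_lip: "loc_lipschitz_on J (sinh_conv K k0)"
proof (rule lip_comp[where F=Y])
  fix s assume s: "s \<in> II"
  obtain e L where "e > 0" "\<And>a b. a \<in> {s - e .. s + e} \<Longrightarrow> b \<in> {s - e .. s + e} \<Longrightarrow> \<bar>X a - X b\<bar> \<le> L * \<bar>a - b\<bar> \<and> \<bar>Y a - Y b\<bar> \<le> L * \<bar>a - b\<bar>"
    using XY_lip[OF s] by metis
  then show "\<exists>e>0. \<exists>L. \<forall>a\<in>{s - e .. s + e}. \<forall>b\<in>{s - e .. s + e}. \<bar>Y a - Y b\<bar> \<le> L * \<bar>a - b\<bar>" by blast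
qed (rule sinh_eq)

definition Nk where "Nk = Th ` {s \<in> II. cf.Dp s \<noteq> cf.Dm s}"

lemma Nk_countable: "countable Nk"
  unfolding Nk_def by (rule countable_image[OF cf.countable_kinks])

lemma Nk_null: "Nk \<in> null_sets lebesgue"
  using null_sets_completionI[OF countable_imp_null_set_lborel[OF Nk_countable]] by simp

lemma not_Nk:
  assumes \<theta>: "\<theta> \<in> J" and n: "\<theta> \<notin> Nk"
  shows "cf.Dp (phi \<theta>) = cf.Dm (phi \<theta>)"
proof (rule ccontr)
  assume "cf.Dp (phi \<theta>) \<noteq> cf.Dm (phi \<theta>)"
  then have "phi \<theta> \<in> {s \<in> II. cf.Dp s \<noteq> cf.Dm s}" using phi_in[OF \<theta>] by simp
  then have "Th (phi \<theta>) \<in> Nk" unfolding Nk_def by (rule imageI)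
  then show False using n Th_phi[OF \<theta>] by simp
qed

end

lemma antipolar_good:
  fixes \<Omega> :: "(real \<times> real) set" and \<omega>0 \<omega>0' :: "real \<times> real"
  assumes pi: "prop_i \<Omega>" and p2: "prop_2star \<Omega>"
    and w0: "\<omega>0 \<in> frontier \<Omega>" and w0': "\<omega>0' \<in> frontier (antipolar \<Omega>)"
    and one: "fst \<omega>0' * fst \<omega>0 - snd \<omega>0' * snd \<omega>0 = 1"
  shows "good_set (antipolar \<Omega>) \<omega>0' \<omega>0"
proof -
  have ne: "\<Omega> \<noteq> {}" and cl: "closed \<Omega>" and z: "(0::real\<times>real) \<notin> \<Omega>"
    using pi by (auto simp: prop_i_def)
  have w0O: "\<omega>0 \<in> \<Omega>" using w0 cl frontier_subset_closed by blast
  have convA: "convex (antipolar \<Omega>)"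
  proof (rule convexI)
    fix x y :: "real \<times> real" and u v :: real
    assume xA: "x \<in> antipolar \<Omega>" and yA: "y \<in> antipolar \<Omega>" and uv: "0 \<le> u" "0 \<le> v" "u + v = 1"
    show "u *\<^sub>R x + v *\<^sub>R y \<in> antipolar \<Omega>" unfolding antipolar_iff
    proof
      fix w assume w: "w \<in> \<Omega>"
      have "1 \<le> bil x w" "1 \<le> bil y w" using xA yA w by (auto simp: antipolar_iff)
      then have "u * 1 + v * 1 \<le> u * bil x w + v * bil y w"
        using uv by (intro add_mono mult_left_mono) auto
      then show "1 \<le> bil (u *\<^sub>R x + v *\<^sub>R y) w" using uv by simp
    qed
  qed
  have closedA: "closed (antipolar \<Omega>)"
  proof -
    have "antipolar \<Omega> = (\<Inter>w\<in>\<Omega>. {\<pi>. 1 \<le> bil \<pi> w})" by (auto simp: antipolar_iff)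
    moreover have "closed {\<pi>. 1 \<le> bil \<pi> w}" for w
      unfolding bil_def by (intro closed_Collect_le continuous_intros)
    ultimately show ?thesis by auto
  qed
  define C where "C = closure (pos_cone \<Omega>)"
  obtain u0 u1 where u: "u0 \<noteq> 0" "u1 \<noteq> 0" "frontier C = ray u0 \<union> ray u1"
    "setdist (ray u0) \<Omega> = 0" "setdist (ray u1) \<Omega> = 0"
    using p2 by (auto simp: prop_2star_def C_def)
  have OC: "\<Omega> \<subseteq> C"
  proof
    fix w assume "w \<in> \<Omega>"
    then have "w \<in> pos_cone \<Omega>" unfolding pos_cone_def by (intro CollectI exI[of _ 1] exI[of _ w]) auto
    then show "w \<in> C" unfolding C_def using closure_subset by blast
  qed
  have Ccone: "c *\<^sub>R v \<in> C" if "v \<in> C" "c > 0" for v c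
  proof -
    have "(*\<^sub>R) c ` pos_cone \<Omega> \<subseteq> pos_cone \<Omega>"
    proof
      fix x assume "x \<in> (*\<^sub>R) c ` pos_cone \<Omega>"
      then obtain y where y: "x = c *\<^sub>R y" "y \<in> pos_cone \<Omega>" by blast
      then obtain t w where "x = c *\<^sub>R (t *\<^sub>R w)" "t > 0" "w \<in> \<Omega>" unfolding pos_cone_def by blast
      then show "x \<in> pos_cone \<Omega>" unfolding pos_cone_def using that(2)
        by (intro CollectI exI[of _ "c * t"] exI[of _ w]) auto
    qed
    then have "closure ((*\<^sub>R) c ` pos_cone \<Omega>) \<subseteq> C" unfolding C_def by (rule closure_mono)
    moreover have "c *\<^sub>R v \<in> (*\<^sub>R) c ` C" using that(1) by blast
    ultimately show ?thesis unfolding C_def closure_scaleR by blast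
  qed
  have starA: "a *\<^sub>R \<pi> \<notin> frontier (antipolar \<Omega>)" if \<pi>A: "\<pi> \<in> antipolar \<Omega>" and a: "a > 1" for \<pi> a
  proof -
    have \<pi>1: "\<And>w. w \<in> \<Omega> \<Longrightarrow> 1 \<le> bil \<pi> w" using \<pi>A by (auto simp: antipolar_iff)
    have step1: "\<forall>v\<in>C. 0 \<le> bil \<pi> v"
    proof -
      have "pos_cone \<Omega> \<subseteq> {v. 0 \<le> bil \<pi> v}"
      proof
        fix x assume "x \<in> pos_cone \<Omega>"
        then obtain t w where "x = t *\<^sub>R w" "t > 0" "w \<in> \<Omega>" unfolding pos_cone_def by blast
        then show "x \<in> {v. 0 \<le> bil \<pi> v}" using \<pi>1[of w] by simp
      qed
      moreover have "closed {v. 0 \<le> bil \<pi> v}" unfolding bil_def by (intro closed_Collect_le continuous_intros)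
      ultimately show ?thesis unfolding C_def using closure_minimal by blast
    qed
    obtain w1 where w1: "w1 \<in> \<Omega>" using ne by blast
    have \<pi>nz: "\<pi> \<noteq> 0" using \<pi>1[OF w1] by auto
    define S where "S = C \<inter> sphere 0 1"
    have Sc: "compact S" unfolding S_def C_def by (intro closed_Int_compact) auto
    have Sne: "S \<noteq> {}"
    proof -
      have "w1 \<noteq> 0" using w1 z by auto
      then have "(1 / norm w1) *\<^sub>R w1 \<in> S" unfolding S_def using OC w1 Ccone[of w1 "1 / norm w1"] by auto
      then show ?thesis by blast
    qed
    have cb: "continuous_on S (bil \<pi>)" unfolding bil_def by (intro continuous_intros)
    obtain v0 where v0: "v0 \<in> S" "\<And>y. y \<in> S \<Longrightarrow> bil \<pi> v0 \<le> bil \<pi> y"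
      using continuous_attains_inf[OF Sc Sne cb] by blast
    define \<delta> where "\<delta> = bil \<pi> v0"
    have v0C: "v0 \<in> C" "norm v0 = 1" using v0 by (auto simp: S_def)
    have \<delta>pos: "\<delta> > 0"
    proof (rule ccontr)
      assume "\<not> \<delta> > 0"
      then have \<delta>0: "bil \<pi> v0 = 0" using step1 v0C by (auto simp: \<delta>_def)
      have "v0 \<notin> interior C"
      proof
        assume "v0 \<in> interior C"
        then obtain e where e: "e > 0" "ball v0 e \<subseteq> C" using mem_interior by blast
        define zz where "zz = (fst \<pi>, - snd \<pi>)"
        have bz: "bil \<pi> zz = (norm \<pi>)\<^sup>2" by (simp add: zz_def bil_def norm_prod_def power2_eq_square)
        have nz: "norm zz = norm \<pi>" by (simp add: zz_def norm_prod_def)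
        define t where "t = e / (2 * (norm zz + 1))"
        have t: "t > 0" using e by (simp add: t_def add_nonneg_pos)
        have "t * norm zz < e"
        proof -
          have "t * norm zz = e * (norm zz / (2 * (norm zz + 1)))" by (simp add: t_def)
          also have "\<dots> < e * 1" by (rule mult_strict_left_mono[OF frac_lt1]) (use e in auto)
          finally show ?thesis by simp
        qed
        then have "v0 - t *\<^sub>R zz \<in> ball v0 e" using t by (simp add: dist_norm)
        then have "0 \<le> bil \<pi> (v0 - t *\<^sub>R zz)" using e step1 by blast
        moreover have "bil \<pi> (v0 - t *\<^sub>R zz) = - t * (norm \<pi>)\<^sup>2" using \<delta>0 bz by simp
        moreover have "0 < t * (norm \<pi>)\<^sup>2" using t \<pi>nz by simp
        ultimately show False by linarith
      qed
      then have "v0 \<in> frontier C" using v0C unfolding frontier_def C_def by auto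
      then have "v0 \<in> ray u0 \<or> v0 \<in> ray u1" using u(3) by blast
      then obtain ui where ui: "ui = u0 \<or> ui = u1" "v0 \<in> ray ui" by blast
      have sd: "setdist (ray ui) \<Omega> = 0" using ui u by auto
      obtain t where t: "v0 = t *\<^sub>R ui" "t \<ge> 0" using ui(2) by (auto simp: ray_def)
      have "t \<noteq> 0" using t v0C by auto
      then have bu: "bil \<pi> ui = 0" using \<delta>0 t by simp
      have "setdist (ray ui) \<Omega> < 1 / (norm \<pi> + 1)" using sd by (simp add: add_nonneg_pos)
      moreover have "ray ui \<noteq> {}"
      proof -
        have "ui \<in> ray ui" unfolding ray_def by (intro CollectI exI[of _ 1]) simp
        then show ?thesis by blast
      qed
      ultimately obtain x y where xy: "x \<in> ray ui" "y \<in> \<Omega>" "dist x y < 1 / (norm \<pi> + 1)"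
        using setdist_ltE ne by metis
      obtain t' where x: "x = t' *\<^sub>R ui" using xy(1) by (auto simp: ray_def)
      have "bil \<pi> y = bil \<pi> (y - x)" using x bu by simp
      also have "\<dots> \<le> norm \<pi> * norm (y - x)" using bil_bound[of \<pi> "y - x"] by simp
      also have "\<dots> \<le> norm \<pi> * (1 / (norm \<pi> + 1))"
        using xy(3) by (intro mult_left_mono) (auto simp: dist_norm norm_minus_commute)
      also have "\<dots> < 1" using frac_lt1'[of "norm \<pi>"] by simp
      finally show False using \<pi>1[OF xy(2)] by simp
    qed
    have step2: "\<delta> * norm v \<le> bil \<pi> v" if "v \<in> C" for v
    proof (cases "v = 0")
      case False
      then have nv: "norm v > 0" by simp
      have "(1 / norm v) *\<^sub>R v \<in> S" unfolding S_def using Ccone[OF that, of "1 / norm v"] nv by auto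
      then have "\<delta> \<le> bil \<pi> ((1 / norm v) *\<^sub>R v)" unfolding \<delta>_def by (rule v0(2))
      then have "\<delta> \<le> bil \<pi> v / norm v" by simp
      then show ?thesis using nv by (simp add: field_simps)
    qed simp
    have "ball (a *\<^sub>R \<pi>) ((a - 1) * \<delta>) \<subseteq> antipolar \<Omega>"
    proof
      fix \<pi>' assume "\<pi>' \<in> ball (a *\<^sub>R \<pi>) ((a - 1) * \<delta>)"
      then have d: "norm (\<pi>' - a *\<^sub>R \<pi>) < (a - 1) * \<delta>" by (simp add: dist_norm norm_minus_commute)
      show "\<pi>' \<in> antipolar \<Omega>" unfolding antipolar_iff
      proof
        fix w assume w: "w \<in> \<Omega>"
        have b1: "1 \<le> bil \<pi> w" by (rule \<pi>1[OF w])
        have b2: "\<delta> * norm w \<le> bil \<pi> w" using step2 OC w by blast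
        have "\<bar>bil (\<pi>' - a *\<^sub>R \<pi>) w\<bar> \<le> norm (\<pi>' - a *\<^sub>R \<pi>) * norm w" by (rule bil_bound)
        also have "\<dots> \<le> (a - 1) * \<delta> * norm w" using d by (intro mult_right_mono) auto
        finally have b3: "\<bar>bil (\<pi>' - a *\<^sub>R \<pi>) w\<bar> \<le> (a - 1) * (\<delta> * norm w)" by simp
        have b4: "(a - 1) * (\<delta> * norm w) \<le> (a - 1) * bil \<pi> w" using b2 a by (intro mult_left_mono) auto
        have "bil \<pi>' w = a * bil \<pi> w + bil (\<pi>' - a *\<^sub>R \<pi>) w" by simp
        then show "1 \<le> bil \<pi>' w" using b1 b3 b4 by (simp add: algebra_simps abs_le_iff)
      qed
    qed
    moreover have "(a - 1) * \<delta> > 0" using a \<delta>pos by simp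
    ultimately have "a *\<^sub>R \<pi> \<in> interior (antipolar \<Omega>)" by (meson centre_in_ball interior_maximal open_ball subsetD)
    then show ?thesis by (simp add: frontier_def)
  qed
  show ?thesis
  proof
    show "convex (antipolar \<Omega>)" by (rule convA)
    show "closed (antipolar \<Omega>)" by (rule closedA)
    show "a *\<^sub>R w \<in> antipolar \<Omega>" if "w \<in> antipolar \<Omega>" "1 < a" for w a
    proof -
      have "\<forall>x\<in>\<Omega>. 1 \<le> bil w x" using that by (auto simp: antipolar_iff)
      then have "\<forall>x\<in>\<Omega>. 1 \<le> bil (a *\<^sub>R w) x" using that(2)
        by (auto intro: order_trans[OF _ mult_mono[of 1 a 1]])
      then show ?thesis by (simp add: antipolar_iff)
    qed
    show "a *\<^sub>R w \<notin> frontier (antipolar \<Omega>)" if "w \<in> antipolar \<Omega>" "1 < a" for w a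
      using starA that by blast
    show "\<omega>0' \<in> frontier (antipolar \<Omega>)" by (rule w0')
    show "1 \<le> bil \<omega>0 w" if "w \<in> antipolar \<Omega>" for w
      using that w0O by (auto simp: antipolar_iff bil_sym)
    show "bil \<omega>0 \<omega>0' = 1" using one by (simp add: bil_def mult.commute)
  qed
qed

lemma omega_good:
  fixes \<Omega> :: "(real \<times> real) set" and \<omega>0 \<omega>0' :: "real \<times> real"
  assumes pi: "prop_i \<Omega>" and ps: "prop_star \<Omega>"
    and w0: "\<omega>0 \<in> frontier \<Omega>" and w0': "\<omega>0' \<in> frontier (antipolar \<Omega>)"
    and one: "fst \<omega>0' * fst \<omega>0 - snd \<omega>0' * snd \<omega>0 = 1"
  shows "good_set \<Omega> \<omega>0 \<omega>0'"
proof
  show "convex \<Omega>" "closed \<Omega>" using pi by (auto simp: prop_i_def)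
  show "a *\<^sub>R w \<in> \<Omega>" if "w \<in> \<Omega>" "1 < a" for w a using pi that by (auto simp: prop_i_def)
  show "a *\<^sub>R w \<notin> frontier \<Omega>" if "w \<in> \<Omega>" "1 < a" for w a
    using ps that unfolding prop_star_def by blast
  show "\<omega>0 \<in> frontier \<Omega>" by (rule w0)
  have clA: "closed (antipolar \<Omega>)"
  proof -
    have "antipolar \<Omega> = (\<Inter>w\<in>\<Omega>. {\<pi>. 1 \<le> bil \<pi> w})" by (auto simp: antipolar_iff)
    moreover have "closed {\<pi>. 1 \<le> bil \<pi> w}" for w
      unfolding bil_def by (intro closed_Collect_le continuous_intros)
    ultimately show ?thesis by auto
  qed
  have "\<omega>0' \<in> antipolar \<Omega>" using w0' clA frontier_subset_closed by blast
  then show "1 \<le> bil \<omega>0' w" if "w \<in> \<Omega>" for w using that by (auto simp: antipolar_iff)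
  show "bil \<omega>0' \<omega>0 = 1" using one by (simp add: bil_def)
qed

theorem theorem5:
  fixes \<Omega> :: "(real \<times> real) set" and \<omega>0 \<omega>0' :: "real \<times> real"
  assumes "prop_i \<Omega>" and "prop_star \<Omega>" and "prop_2star \<Omega>"
    and "\<omega>0 \<in> frontier \<Omega>" and "\<omega>0' \<in> frontier (antipolar \<Omega>)"
    and "fst \<omega>0' * fst \<omega>0 - snd \<omega>0' * snd \<omega>0 = 1"
  shows
    "loc_lipschitz_on (conv_domain \<Omega> \<omega>0) (cosh_conv \<Omega> \<omega>0) \<and>
     loc_lipschitz_on (conv_domain \<Omega> \<omega>0) (sinh_conv \<Omega> \<omega>0) \<and>
     (\<exists>N. N \<in> null_sets lebesgue \<and>
        (\<forall>\<theta> \<in> conv_domain \<Omega> \<omega>0 - N.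
           cosh_conv \<Omega> \<omega>0 differentiable (at \<theta>) \<and> sinh_conv \<Omega> \<omega>0 differentiable (at \<theta>))) \<and>
     (\<forall>\<theta> \<in> conv_domain \<Omega> \<omega>0. \<forall>\<eta>. dual_angles \<Omega> \<omega>0 \<omega>0' \<theta> = {\<eta>} \<longrightarrow>
        (cosh_conv \<Omega> \<omega>0 has_real_derivative sinh_conv (antipolar \<Omega>) \<omega>0' \<eta>) (at \<theta>) \<and>
        (sinh_conv \<Omega> \<omega>0 has_real_derivative cosh_conv (antipolar \<Omega>) \<omega>0' \<eta>) (at \<theta>)) \<and>
     (\<exists>Lc Rc :: real \<Rightarrow> real.
        (\<forall>\<theta> \<in> conv_domain \<Omega> \<omega>0.
           (cosh_conv \<Omega> \<omega>0 has_real_derivative Lc \<theta>) (at \<theta> within {..\<theta>}) \<and>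
           (cosh_conv \<Omega> \<omega>0 has_real_derivative Rc \<theta>) (at \<theta> within {\<theta>..})) \<and>
        countable {\<theta> \<in> conv_domain \<Omega> \<omega>0. Lc \<theta> \<noteq> Rc \<theta>} \<and>
        (\<forall>\<theta> \<in> conv_domain \<Omega> \<omega>0. Lc \<theta> \<noteq> Rc \<theta> \<longrightarrow>
           (\<forall>\<eta> \<in> dual_angles \<Omega> \<omega>0 \<omega>0' \<theta>.
              min (Lc \<theta>) (Rc \<theta>) \<le> sinh_conv (antipolar \<Omega>) \<omega>0' \<eta> \<and>
              sinh_conv (antipolar \<Omega>) \<omega>0' \<eta> \<le> max (Lc \<theta>) (Rc \<theta>)))) \<and>
     (\<exists>Ls Rs :: real \<Rightarrow> real.
        (\<forall>\<theta> \<in> conv_domain \<Omega> \<omega>0.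
           (sinh_conv \<Omega> \<omega>0 has_real_derivative Ls \<theta>) (at \<theta> within {..\<theta>}) \<and>
           (sinh_conv \<Omega> \<omega>0 has_real_derivative Rs \<theta>) (at \<theta> within {\<theta>..})) \<and>
        countable {\<theta> \<in> conv_domain \<Omega> \<omega>0. Ls \<theta> \<noteq> Rs \<theta>} \<and>
        (\<forall>\<theta> \<in> conv_domain \<Omega> \<omega>0. Ls \<theta> \<noteq> Rs \<theta> \<longrightarrow>
           (\<forall>\<eta> \<in> dual_angles \<Omega> \<omega>0 \<omega>0' \<theta>.
              min (Ls \<theta>) (Rs \<theta>) \<le> cosh_conv (antipolar \<Omega>) \<omega>0' \<eta> \<and>
              cosh_conv (antipolar \<Omega>) \<omega>0' \<eta> \<le> max (Ls \<theta>) (Rs \<theta>))))"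
proof -
  interpret P: good_set \<Omega> \<omega>0 \<omega>0' by (rule omega_good[OF assms(1,2,4,5,6)])
  interpret Q: good_set "antipolar \<Omega>" \<omega>0' \<omega>0 by (rule antipolar_good[OF assms(1,3,4,5,6)])
  have dom: "conv_domain \<Omega> \<omega>0 = P.J" by (rule P.J_eq)
  have cp: "conv_point \<Omega> \<omega>0 \<theta> = P.om (P.phi \<theta>)" if "\<theta> \<in> P.J" for \<theta>
    using P.point_eq[OF P.phi_in[OF that]] P.Th_phi[OF that] by simp
  have D1: "\<exists>\<beta>. P.cf.Dp (P.phi \<theta>) \<le> \<beta> \<and> \<beta> \<le> P.cf.Dm (P.phi \<theta>) \<and>
      cosh_conv (antipolar \<Omega>) \<omega>0' \<eta> = fst (P.Pi (P.phi \<theta>) \<beta>) \<and>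
      sinh_conv (antipolar \<Omega>) \<omega>0' \<eta> = snd (P.Pi (P.phi \<theta>) \<beta>)"
    if \<theta>: "\<theta> \<in> P.J" and \<eta>: "\<eta> \<in> dual_angles \<Omega> \<omega>0 \<omega>0' \<theta>" for \<theta> \<eta>
  proof -
    have s: "P.phi \<theta> \<in> P.II" by (rule P.phi_in[OF \<theta>])
    have "\<eta> \<in> Q.J" using \<eta> Q.J_eq by (simp add: dual_angles_def)
    then obtain \<sigma> where \<sigma>: "\<sigma> \<in> Q.II" "\<eta> = Q.Th \<sigma>" by (auto simp: Q.J_def)
    have cpQ: "conv_point (antipolar \<Omega>) \<omega>0' \<eta> = Q.om \<sigma>" using Q.point_eq[OF \<sigma>(1)] \<sigma>(2) by simp
    have \<pi>A: "Q.om \<sigma> \<in> antipolar \<Omega>" by (rule Q.om_K[OF \<sigma>(1)])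
    have "cosh_conv \<Omega> \<omega>0 \<theta> * cosh_conv (antipolar \<Omega>) \<omega>0' \<eta> - sinh_conv \<Omega> \<omega>0 \<theta> * sinh_conv (antipolar \<Omega>) \<omega>0' \<eta> = 1"
      using \<eta> by (simp add: dual_angles_def)
    then have "bil (Q.om \<sigma>) (P.om (P.phi \<theta>)) = 1"
      using cp[OF \<theta>] cpQ by (simp add: cosh_conv_def sinh_conv_def bil_def mult.commute)
    from P.support_char[OF s \<pi>A this] obtain \<beta> where
      \<beta>: "P.cf.Dp (P.phi \<theta>) \<le> \<beta>" "\<beta> \<le> P.cf.Dm (P.phi \<theta>)" "Q.om \<sigma> = P.Pi (P.phi \<theta>) \<beta>" by blast
    then show ?thesis using cpQ by (auto simp: cosh_conv_def sinh_conv_def)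
  qed
  have D2: "\<exists>\<eta>\<in>dual_angles \<Omega> \<omega>0 \<omega>0' \<theta>. cosh_conv (antipolar \<Omega>) \<omega>0' \<eta> = fst (P.Pi (P.phi \<theta>) \<beta>) \<and>
      sinh_conv (antipolar \<Omega>) \<omega>0' \<eta> = snd (P.Pi (P.phi \<theta>) \<beta>)"
    if \<theta>: "\<theta> \<in> P.J" and b: "P.cf.Dp (P.phi \<theta>) \<le> \<beta>" "\<beta> \<le> P.cf.Dm (P.phi \<theta>)" for \<theta> \<beta>
  proof -
    have s: "P.phi \<theta> \<in> P.II" by (rule P.phi_in[OF \<theta>])
    have \<pi>A: "P.Pi (P.phi \<theta>) \<beta> \<in> antipolar \<Omega>" and one: "bil (P.Pi (P.phi \<theta>) \<beta>) (P.om (P.phi \<theta>)) = 1"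
      using P.Pi_support[OF s b] by auto
    have "P.Pi (P.phi \<theta>) \<beta> \<in> frontier (antipolar \<Omega>)"
      by (rule P.antipolar_frontier[OF \<pi>A P.om_K[OF s] one])
    then obtain \<sigma> where \<sigma>: "\<sigma> \<in> Q.II" "P.Pi (P.phi \<theta>) \<beta> = Q.om \<sigma>" by (rule Q.frontier_om)
    have cpQ: "conv_point (antipolar \<Omega>) \<omega>0' (Q.Th \<sigma>) = Q.om \<sigma>" by (rule Q.point_eq[OF \<sigma>(1)])
    have dm: "Q.Th \<sigma> \<in> conv_domain (antipolar \<Omega>) \<omega>0'" using \<sigma>(1) by (simp add: Q.domain_eq)
    have "Q.Th \<sigma> \<in> dual_angles \<Omega> \<omega>0 \<omega>0' \<theta>"
      unfolding dual_angles_def using dm one cp[OF \<theta>] cpQ \<sigma>(2)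
      by (simp add: cosh_conv_def sinh_conv_def bil_def mult.commute)
    moreover have "cosh_conv (antipolar \<Omega>) \<omega>0' (Q.Th \<sigma>) = fst (P.Pi (P.phi \<theta>) \<beta>)"
      "sinh_conv (antipolar \<Omega>) \<omega>0' (Q.Th \<sigma>) = snd (P.Pi (P.phi \<theta>) \<beta>)"
      using cpQ \<sigma>(2) by (auto simp: cosh_conv_def sinh_conv_def)
    ultimately show ?thesis by blast
  qed
  have le: "P.cf.Dp (P.phi \<theta>) \<le> P.cf.Dm (P.phi \<theta>)" if "\<theta> \<in> P.J" for \<theta>
    by (rule P.cf.Dp_le_Dm[OF P.phi_in[OF that]])
  show ?thesis
  proof (intro conjI)
    show "loc_lipschitz_on (conv_domain \<Omega> \<omega>0) (cosh_conv \<Omega> \<omega>0)" unfolding dom by (rule P.cosh_lip)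
    show "loc_lipschitz_on (conv_domain \<Omega> \<omega>0) (sinh_conv \<Omega> \<omega>0)" unfolding dom by (rule P.sinh_lip)
    show "\<exists>N. N \<in> null_sets lebesgue \<and>
        (\<forall>\<theta> \<in> conv_domain \<Omega> \<omega>0 - N.
           cosh_conv \<Omega> \<omega>0 differentiable (at \<theta>) \<and> sinh_conv \<Omega> \<omega>0 differentiable (at \<theta>))"
    proof (intro exI conjI ballI)
      show "P.Nk \<in> null_sets lebesgue" by (rule P.Nk_null)
      fix \<theta> assume "\<theta> \<in> conv_domain \<Omega> \<omega>0 - P.Nk"
      then have \<theta>: "\<theta> \<in> P.J" "\<theta> \<notin> P.Nk" using dom by auto
      have eq: "P.cf.Dp (P.phi \<theta>) = P.cf.Dm (P.phi \<theta>)" by (rule P.not_Nk[OF \<theta>])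
      show "cosh_conv \<Omega> \<omega>0 differentiable (at \<theta>)"
        using P.cosh_both(1)[OF \<theta>(1) eq] by (auto simp: real_differentiable_def)
      show "sinh_conv \<Omega> \<omega>0 differentiable (at \<theta>)"
        using P.cosh_both(2)[OF \<theta>(1) eq] by (auto simp: real_differentiable_def)
    qed
    show "\<forall>\<theta> \<in> conv_domain \<Omega> \<omega>0. \<forall>\<eta>. dual_angles \<Omega> \<omega>0 \<omega>0' \<theta> = {\<eta>} \<longrightarrow>
        (cosh_conv \<Omega> \<omega>0 has_real_derivative sinh_conv (antipolar \<Omega>) \<omega>0' \<eta>) (at \<theta>) \<and>
        (sinh_conv \<Omega> \<omega>0 has_real_derivative cosh_conv (antipolar \<Omega>) \<omega>0' \<eta>) (at \<theta>)"
    proof (intro ballI allI impI)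
      fix \<theta> \<eta> assume \<theta>0: "\<theta> \<in> conv_domain \<Omega> \<omega>0" and single: "dual_angles \<Omega> \<omega>0 \<omega>0' \<theta> = {\<eta>}"
      have \<theta>: "\<theta> \<in> P.J" using \<theta>0 dom by simp
      obtain \<eta>1 where \<eta>1: "\<eta>1 \<in> dual_angles \<Omega> \<omega>0 \<omega>0' \<theta>"
        "cosh_conv (antipolar \<Omega>) \<omega>0' \<eta>1 = fst (P.Pi (P.phi \<theta>) (P.cf.Dp (P.phi \<theta>)))"
        "sinh_conv (antipolar \<Omega>) \<omega>0' \<eta>1 = snd (P.Pi (P.phi \<theta>) (P.cf.Dp (P.phi \<theta>)))"
        using D2[OF \<theta> order_refl le[OF \<theta>]] by blast
      obtain \<eta>2 where \<eta>2: "\<eta>2 \<in> dual_angles \<Omega> \<omega>0 \<omega>0' \<theta>"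
        "cosh_conv (antipolar \<Omega>) \<omega>0' \<eta>2 = fst (P.Pi (P.phi \<theta>) (P.cf.Dm (P.phi \<theta>)))"
        "sinh_conv (antipolar \<Omega>) \<omega>0' \<eta>2 = snd (P.Pi (P.phi \<theta>) (P.cf.Dm (P.phi \<theta>)))"
        using D2[OF \<theta> le[OF \<theta>] order_refl] by blast
      have e1: "\<eta>1 = \<eta>" "\<eta>2 = \<eta>" using \<eta>1(1) \<eta>2(1) single by auto
      have "P.Pi (P.phi \<theta>) (P.cf.Dp (P.phi \<theta>)) = P.Pi (P.phi \<theta>) (P.cf.Dm (P.phi \<theta>))"
        using \<eta>1 \<eta>2 e1 by (simp add: prod_eq_iff)
      then have eq: "P.cf.Dp (P.phi \<theta>) = P.cf.Dm (P.phi \<theta>)" by (rule P.Pi_inj)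
      show "(cosh_conv \<Omega> \<omega>0 has_real_derivative sinh_conv (antipolar \<Omega>) \<omega>0' \<eta>) (at \<theta>) \<and>
        (sinh_conv \<Omega> \<omega>0 has_real_derivative cosh_conv (antipolar \<Omega>) \<omega>0' \<eta>) (at \<theta>)"
        using P.cosh_both[OF \<theta> eq] \<eta>1 e1 by simp
    qed
    show "\<exists>Lc Rc :: real \<Rightarrow> real.
        (\<forall>\<theta> \<in> conv_domain \<Omega> \<omega>0.
           (cosh_conv \<Omega> \<omega>0 has_real_derivative Lc \<theta>) (at \<theta> within {..\<theta>}) \<and>
           (cosh_conv \<Omega> \<omega>0 has_real_derivative Rc \<theta>) (at \<theta> within {\<theta>..})) \<and>
        countable {\<theta> \<in> conv_domain \<Omega> \<omega>0. Lc \<theta> \<noteq> Rc \<theta>} \<and>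
        (\<forall>\<theta> \<in> conv_domain \<Omega> \<omega>0. Lc \<theta> \<noteq> Rc \<theta> \<longrightarrow>
           (\<forall>\<eta> \<in> dual_angles \<Omega> \<omega>0 \<omega>0' \<theta>.
              min (Lc \<theta>) (Rc \<theta>) \<le> sinh_conv (antipolar \<Omega>) \<omega>0' \<eta> \<and>
              sinh_conv (antipolar \<Omega>) \<omega>0' \<eta> \<le> max (Lc \<theta>) (Rc \<theta>)))"
    proof -
      define Lc where "Lc \<theta> = snd (P.Pi (P.phi \<theta>) (P.cf.Dm (P.phi \<theta>)))" for \<theta>
      define Rc where "Rc \<theta> = snd (P.Pi (P.phi \<theta>) (P.cf.Dp (P.phi \<theta>)))" for \<theta>
      have 1: "\<forall>\<theta> \<in> conv_domain \<Omega> \<omega>0.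
           (cosh_conv \<Omega> \<omega>0 has_real_derivative Lc \<theta>) (at \<theta> within {..\<theta>}) \<and>
           (cosh_conv \<Omega> \<omega>0 has_real_derivative Rc \<theta>) (at \<theta> within {\<theta>..})"
      proof
        fix \<theta> assume "\<theta> \<in> conv_domain \<Omega> \<omega>0"
        then have \<theta>: "\<theta> \<in> P.J" using dom by simp
        show "(cosh_conv \<Omega> \<omega>0 has_real_derivative Lc \<theta>) (at \<theta> within {..\<theta>}) \<and>
           (cosh_conv \<Omega> \<omega>0 has_real_derivative Rc \<theta>) (at \<theta> within {\<theta>..})"
          unfolding Lc_def Rc_def using P.cosh_left(1)[OF \<theta>] P.cosh_right(1)[OF \<theta>] by simp
      qed
      have 2: "countable {\<theta> \<in> conv_domain \<Omega> \<omega>0. Lc \<theta> \<noteq> Rc \<theta>}"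
      proof (rule countable_subset[OF _ P.Nk_countable])
        show "{\<theta> \<in> conv_domain \<Omega> \<omega>0. Lc \<theta> \<noteq> Rc \<theta>} \<subseteq> P.Nk"
        proof
          fix \<theta> assume "\<theta> \<in> {\<theta> \<in> conv_domain \<Omega> \<omega>0. Lc \<theta> \<noteq> Rc \<theta>}"
          then have \<theta>: "\<theta> \<in> P.J" and ne: "Lc \<theta> \<noteq> Rc \<theta>" using dom by auto
          show "\<theta> \<in> P.Nk"
          proof (rule ccontr)
            assume "\<theta> \<notin> P.Nk"
            then have "P.cf.Dp (P.phi \<theta>) = P.cf.Dm (P.phi \<theta>)" by (rule P.not_Nk[OF \<theta>])
            then show False using ne by (simp add: Lc_def Rc_def)
          qed
        qed
      qed
      have 3: "\<forall>\<theta> \<in> conv_domain \<Omega> \<omega>0. Lc \<theta> \<noteq> Rc \<theta> \<longrightarrow>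
           (\<forall>\<eta> \<in> dual_angles \<Omega> \<omega>0 \<omega>0' \<theta>.
              min (Lc \<theta>) (Rc \<theta>) \<le> sinh_conv (antipolar \<Omega>) \<omega>0' \<eta> \<and>
              sinh_conv (antipolar \<Omega>) \<omega>0' \<eta> \<le> max (Lc \<theta>) (Rc \<theta>))"
      proof (intro ballI impI)
        fix \<theta> \<eta> assume "\<theta> \<in> conv_domain \<Omega> \<omega>0" and \<eta>: "\<eta> \<in> dual_angles \<Omega> \<omega>0 \<omega>0' \<theta>"
        then have \<theta>: "\<theta> \<in> P.J" using dom by simp
        obtain \<beta> where \<beta>: "P.cf.Dp (P.phi \<theta>) \<le> \<beta>" "\<beta> \<le> P.cf.Dm (P.phi \<theta>)"
          "sinh_conv (antipolar \<Omega>) \<omega>0' \<eta> = snd (P.Pi (P.phi \<theta>) \<beta>)"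
          using D1[OF \<theta> \<eta>] by blast
        show "min (Lc \<theta>) (Rc \<theta>) \<le> sinh_conv (antipolar \<Omega>) \<omega>0' \<eta> \<and>
              sinh_conv (antipolar \<Omega>) \<omega>0' \<eta> \<le> max (Lc \<theta>) (Rc \<theta>)"
          using affine_between[OF \<beta>(1,2), of "fst P.bb * P.hh (P.phi \<theta>)" "fst (P.d (P.phi \<theta>))"] \<beta>(3)
          by (simp add: Lc_def Rc_def P.Pi_def min.commute max.commute)
      qed
      show ?thesis using 1 2 3 by blast
    qed
    show "\<exists>Ls Rs :: real \<Rightarrow> real.
        (\<forall>\<theta> \<in> conv_domain \<Omega> \<omega>0.
           (sinh_conv \<Omega> \<omega>0 has_real_derivative Ls \<theta>) (at \<theta> within {..\<theta>}) \<and>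
           (sinh_conv \<Omega> \<omega>0 has_real_derivative Rs \<theta>) (at \<theta> within {\<theta>..})) \<and>
        countable {\<theta> \<in> conv_domain \<Omega> \<omega>0. Ls \<theta> \<noteq> Rs \<theta>} \<and>
        (\<forall>\<theta> \<in> conv_domain \<Omega> \<omega>0. Ls \<theta> \<noteq> Rs \<theta> \<longrightarrow>
           (\<forall>\<eta> \<in> dual_angles \<Omega> \<omega>0 \<omega>0' \<theta>.
              min (Ls \<theta>) (Rs \<theta>) \<le> cosh_conv (antipolar \<Omega>) \<omega>0' \<eta> \<and>
              cosh_conv (antipolar \<Omega>) \<omega>0' \<eta> \<le> max (Ls \<theta>) (Rs \<theta>)))"
    proof -
      define Ls where "Ls \<theta> = fst (P.Pi (P.phi \<theta>) (P.cf.Dm (P.phi \<theta>)))" for \<theta>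
      define Rs where "Rs \<theta> = fst (P.Pi (P.phi \<theta>) (P.cf.Dp (P.phi \<theta>)))" for \<theta>
      have 1: "\<forall>\<theta> \<in> conv_domain \<Omega> \<omega>0.
           (sinh_conv \<Omega> \<omega>0 has_real_derivative Ls \<theta>) (at \<theta> within {..\<theta>}) \<and>
           (sinh_conv \<Omega> \<omega>0 has_real_derivative Rs \<theta>) (at \<theta> within {\<theta>..})"
      proof
        fix \<theta> assume "\<theta> \<in> conv_domain \<Omega> \<omega>0"
        then have \<theta>: "\<theta> \<in> P.J" using dom by simp
        show "(sinh_conv \<Omega> \<omega>0 has_real_derivative Ls \<theta>) (at \<theta> within {..\<theta>}) \<and>
           (sinh_conv \<Omega> \<omega>0 has_real_derivative Rs \<theta>) (at \<theta> within {\<theta>..})"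
          unfolding Ls_def Rs_def using P.cosh_left(2)[OF \<theta>] P.cosh_right(2)[OF \<theta>] by simp
      qed
      have 2: "countable {\<theta> \<in> conv_domain \<Omega> \<omega>0. Ls \<theta> \<noteq> Rs \<theta>}"
      proof (rule countable_subset[OF _ P.Nk_countable])
        show "{\<theta> \<in> conv_domain \<Omega> \<omega>0. Ls \<theta> \<noteq> Rs \<theta>} \<subseteq> P.Nk"
        proof
          fix \<theta> assume "\<theta> \<in> {\<theta> \<in> conv_domain \<Omega> \<omega>0. Ls \<theta> \<noteq> Rs \<theta>}"
          then have \<theta>: "\<theta> \<in> P.J" and ne: "Ls \<theta> \<noteq> Rs \<theta>" using dom by auto
          show "\<theta> \<in> P.Nk"
          proof (rule ccontr)
            assume "\<theta> \<notin> P.Nk"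
            then have "P.cf.Dp (P.phi \<theta>) = P.cf.Dm (P.phi \<theta>)" by (rule P.not_Nk[OF \<theta>])
            then show False using ne by (simp add: Ls_def Rs_def)
          qed
        qed
      qed
      have 3: "\<forall>\<theta> \<in> conv_domain \<Omega> \<omega>0. Ls \<theta> \<noteq> Rs \<theta> \<longrightarrow>
           (\<forall>\<eta> \<in> dual_angles \<Omega> \<omega>0 \<omega>0' \<theta>.
              min (Ls \<theta>) (Rs \<theta>) \<le> cosh_conv (antipolar \<Omega>) \<omega>0' \<eta> \<and>
              cosh_conv (antipolar \<Omega>) \<omega>0' \<eta> \<le> max (Ls \<theta>) (Rs \<theta>))"
      proof (intro ballI impI)
        fix \<theta> \<eta> assume "\<theta> \<in> conv_domain \<Omega> \<omega>0" and \<eta>: "\<eta> \<in> dual_angles \<Omega> \<omega>0 \<omega>0' \<theta>"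
        then have \<theta>: "\<theta> \<in> P.J" using dom by simp
        obtain \<beta> where \<beta>: "P.cf.Dp (P.phi \<theta>) \<le> \<beta>" "\<beta> \<le> P.cf.Dm (P.phi \<theta>)"
          "cosh_conv (antipolar \<Omega>) \<omega>0' \<eta> = fst (P.Pi (P.phi \<theta>) \<beta>)"
          using D1[OF \<theta> \<eta>] by blast
        show "min (Ls \<theta>) (Rs \<theta>) \<le> cosh_conv (antipolar \<Omega>) \<omega>0' \<eta> \<and>
              cosh_conv (antipolar \<Omega>) \<omega>0' \<eta> \<le> max (Ls \<theta>) (Rs \<theta>)"
          using affine_between[OF \<beta>(1,2), of "snd P.bb * P.hh (P.phi \<theta>)" "snd (P.d (P.phi \<theta>))"] \<beta>(3)
          by (simp add: Ls_def Rs_def P.Pi_def min.commute max.commute)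
      qed
      show ?thesis using 1 2 3 by blast
    qed
  qed
qed

end
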